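(* Let $H$ be a finite-dimensional real Hilbert space, $A\in B(H,H)$ symmetric with $\|A^{1/2}\mathbf{u}\|^2\ge\ell_0\|\mathbf{u}\|^2$ for all $\mathbf{u}$ ($\ell_0>0$), $\mathbf{N}:H\to H$ locally Lipschitz with $\mathbf{N}(\mathbf{u})\cdot\mathbf{u}=0$ for all $\mathbf{u}$, $\mathbf{F}\in H$ constant, and $\gamma>0$. Let $\mathscr{A}$ be the global attractor of $\frac{d\mathbf{u}}{dt}+A\mathbf{u}+\mathbf{N}(\mathbf{u})=\mathbf{F}$ on $H$, and $\mathscr{A}_q$ the global attractor of the augmented system $\frac{d\mathbf{u}}{dt}+A\mathbf{u}+q\mathbf{N}(\mathbf{u})=\mathbf{F}$, $\frac{dq}{dt}-\mathbf{N}(\mathbf{u})\cdot\mathbf{u}=-\gamma q+\gamma$ on $H\times\mathbb{R}$. For $k\in(0,1]$ let $\mathbb{S}_k((\mathbf{u}_0,\mathbf{u}_1),(q_0,q_1))=((\mathbf{u}_1,\mathbf{u}_2),(q_1,q_2))$, where $(\mathbf{u}_2,q_2)$ is the unique solution of $$\frac{3\mathbf{u}_2-4\mathbf{u}_1+\mathbf{u}_0}{2k}+A\mathbf{u}_2+q_2\mathbf{N}(2\mathbf{u}_1-\mathbf{u}_0)=\mathbf{F},\qquad \frac{3q_2-4q_1+q_0}{2k}+\gamma q_2-\mathbf{N}(2\mathbf{u}_1-\mathbf{u}_0)\cdot\mathbf{u}_2=\gamma,$$ and let $\mathscr{A}_k$ be the global attractor of $\mathbb{S}_k$ on $(H\times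 H)\times\mathbb{R}^2$. Then $$\mathrm{dist}(\mathscr{A}_k,\mathbb{1}\mathscr{A}_q)\to0\quad\text{as }k\to0,$$ where $\mathbb{1}\mathscr{A}_q=\{((\mathbf{u},q),(\mathbf{u},q)):(\mathbf{u},q)\in\mathscr{A}_q\}$. In particular, for $j=1,2$, $$\mathrm{dist}(\mathcal{P}_u\mathcal{P}_j\mathscr{A}_k,\mathscr{A})\to0\quad\text{as }k\to0.$$
   Context: Elements $((\mathbf{u}_1,\mathbf{u}_2),(q_1,q_2))$ of $(H\times H)\times\mathbb{R}^2$ are identified with pairs $((\mathbf{u}_1,q_1),(\mathbf{u}_2,q_2))\in(H\times\mathbb{R})^2$. $\mathcal{P}_j$ is the projection onto the $j$-th component, $\mathcal{P}_j((\mathbf{u}_1,\mathbf{u}_2),(q_1,q_2))=(\mathbf{u}_j,q_j)$, and $\mathcal{P}_u:H\times\mathbb{R}\to H$, $(\mathbf{u},q)\mapsto\mathbf{u}$. $\mathrm{dist}(X,Y)=\sup_{x\in X}\inf_{y\in Y}\|x-y\|$ is the Hausdorff semi-distance. Global attractor: compact invariant set attracting all bounded sets. *)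

theory Defs
  imports "HOL-Analysis.Analysis"
begin

text \<open>Hausdorff semi-distance dist(X,Y) = sup over x in X of inf over y in Y of the distance,
  valued in [0,\<infinity>] so that it is well defined for arbitrary sets
  (sup of the empty set is 0, inf over the empty set is \<infinity>).\<close>
definition hsdist :: "'b::metric_space set \<Rightarrow> 'b set \<Rightarrow> ennreal" where
  "hsdist X Y = (SUP x\<in>X. INF y\<in>Y. ennreal (dist x y))"

definition global_attractor_flow :: "(real \<Rightarrow> 'b::metric_space \<Rightarrow> 'b) \<Rightarrow> 'b set \<Rightarrow> bool" where
  "global_attractor_flow S X \<longleftrightarrow>
     compact X \<and> (\<forall>t\<ge>0. S t ` X = X) \<and>
     (\<forall>B. bounded B \<longrightarrow> ((\<lambda>t. hsdist (S t ` B) X) \<longlongrightarrow> 0) at_top)"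

definition global_attractor_map :: "('b::metric_space \<Rightarrow> 'b) \<Rightarrow> 'b set \<Rightarrow> bool" where
  "global_attractor_map T X \<longleftrightarrow>
     compact X \<and> T ` X = X \<and>
     (\<forall>B. bounded B \<longrightarrow> ((\<lambda>n. hsdist ((T ^^ n) ` B) X) \<longlongrightarrow> 0) sequentially)"

definition solution_semigroup :: "('b::real_normed_vector \<Rightarrow> 'b) \<Rightarrow> (real \<Rightarrow> 'b \<Rightarrow> 'b) \<Rightarrow> bool" where
  "solution_semigroup f S \<longleftrightarrow>
     (\<forall>x. S 0 x = x \<and>
        (\<forall>t\<ge>0. ((\<lambda>s. S s x) has_vector_derivative f (S t x)) (at t within {0..})))"

definition locally_lipschitz :: "('b::metric_space \<Rightarrow> 'c::metric_space) \<Rightarrow> bool" where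
  "locally_lipschitz N \<longleftrightarrow>
     (\<forall>x. \<exists>r>0. \<exists>L. \<forall>y\<in>ball x r. \<forall>z\<in>ball x r. dist (N y) (N z) \<le> L * dist y z)"

definition nse_field :: "('a::real_inner \<Rightarrow> 'a) \<Rightarrow> ('a \<Rightarrow> 'a) \<Rightarrow> 'a \<Rightarrow> 'a \<Rightarrow> 'a" where
  "nse_field A N F u = F - A u - N u"

definition aug_field :: "('a::real_inner \<Rightarrow> 'a) \<Rightarrow> ('a \<Rightarrow> 'a) \<Rightarrow> 'a \<Rightarrow> real \<Rightarrow> 'a \<times> real \<Rightarrow> 'a \<times> real" where
  "aug_field A N F \<gamma> p = (case p of (u, q) \<Rightarrow>
      (F - A u - q *\<^sub>R N u, N u \<bullet> u - \<gamma> * q + \<gamma>))"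

definition bdf2_eqs :: "('a::real_inner \<Rightarrow> 'a) \<Rightarrow> ('a \<Rightarrow> 'a) \<Rightarrow> 'a \<Rightarrow> real \<Rightarrow> real \<Rightarrow>
    'a \<Rightarrow> real \<Rightarrow> 'a \<Rightarrow> real \<Rightarrow> 'a \<Rightarrow> real \<Rightarrow> bool" where
  "bdf2_eqs A N F \<gamma> k u0 q0 u1 q1 u2 q2 \<longleftrightarrow>
     (1 / (2 * k)) *\<^sub>R (3 *\<^sub>R u2 - 4 *\<^sub>R u1 + u0) + A u2 + q2 *\<^sub>R N (2 *\<^sub>R u1 - u0) = F \<and>
     (3 * q2 - 4 * q1 + q0) / (2 * k) + \<gamma> * q2 - N (2 *\<^sub>R u1 - u0) \<bullet> u2 = \<gamma>"

text \<open>The map S_k; the element ((u0,u1),(q0,q1)) of (H\<times>H)\<times>R^2 is identified with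
  ((u0,q0),(u1,q1)) \<in> (H\<times>R)^2.\<close>
definition bdf2_map :: "('a::real_inner \<Rightarrow> 'a) \<Rightarrow> ('a \<Rightarrow> 'a) \<Rightarrow> 'a \<Rightarrow> real \<Rightarrow> real \<Rightarrow>
    ('a \<times> real) \<times> ('a \<times> real) \<Rightarrow> ('a \<times> real) \<times> ('a \<times> real)" where
  "bdf2_map A N F \<gamma> k w = (case w of ((u0, q0), (u1, q1)) \<Rightarrow>
      ((u1, q1), (THE p. bdf2_eqs A N F \<gamma> k u0 q0 u1 q1 (fst p) (snd p))))"

definition diag_set :: "'b set \<Rightarrow> ('b \<times> 'b) set" where
  "diag_set X = {(x, x) | x. x \<in> X}"

end

theory Submission
  imports Defs
begin

lemma hsdist_le:
  assumes "e \<ge> 0" "\<And>x. x \<in> X \<Longrightarrow> \<exists>y\<in>Y. dist x y \<le> e"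
  shows "hsdist X Y \<le> ennreal e"
  unfolding hsdist_def
proof (rule SUP_least)
  fix x assume "x \<in> X"
  then obtain y where "y \<in> Y" "dist x y \<le> e" using assms by blast
  then show "(INF y\<in>Y. ennreal (dist x y)) \<le> ennreal e"
    by (meson INF_lower2 ennreal_leI)
qed

lemma hsdist_lt:
  assumes "hsdist X Y < ennreal e" "x \<in> X"
  shows "\<exists>y\<in>Y. dist x y < e"
proof -
  have "(INF y\<in>Y. ennreal (dist x y)) < ennreal e"
    using assms unfolding hsdist_def by (meson SUP_upper le_less_trans)
  then obtain y where "y \<in> Y" "ennreal (dist x y) < ennreal e" by (meson INF_less_iff)
  then show ?thesis using ennreal_less_iff zero_le_dist by blast
qed

lemma tendsto_hsdist_0:
  assumes "\<And>e. e > 0 \<Longrightarrow> eventually (\<lambda>k. \<forall>x\<in>X k. \<exists>y\<in>Y. dist x y \<le> e) F"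
  shows "((\<lambda>k. hsdist (X k) Y) \<longlongrightarrow> 0) F"
proof (rule order_tendstoI)
  fix a :: ennreal assume "a < 0" then show "eventually (\<lambda>k. a < hsdist (X k) Y) F" by simp
next
  fix a :: ennreal assume a: "0 < a"
  obtain e where e: "0 < e" "ennreal e < a"
  proof (cases "a = top")
    case True then show ?thesis using that[of 1] by simp
  next
    case False
    then obtain r where r: "a = ennreal r" "r \<ge> 0" by (cases a) auto
    then have "r > 0" using a by simp
    then show ?thesis using that[of "r/2"] r by (simp add: ennreal_lessI)
  qed
  show "eventually (\<lambda>k. hsdist (X k) Y < a) F"
    using assms[OF e(1)]
  proof (rule eventually_mono)
    fix k assume "\<forall>x\<in>X k. \<exists>y\<in>Y. dist x y \<le> e"
    then have "hsdist (X k) Y \<le> ennreal e" using e by (intro hsdist_le) auto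
    then show "hsdist (X k) Y < a" using e(2) by order
  qed
qed

lemma attract_flow:
  assumes "global_attractor_flow S X" "bounded B" "e > 0"
  shows "\<exists>T. \<forall>t\<ge>T. \<forall>x\<in>B. \<exists>y\<in>X. dist (S t x) y < e"
proof -
  have "((\<lambda>t. hsdist (S t ` B) X) \<longlongrightarrow> 0) at_top" using assms unfolding global_attractor_flow_def by blast
  then have "eventually (\<lambda>t. hsdist (S t ` B) X < ennreal e) at_top"
    using assms(3) by (simp add: order_tendstoD(2))
  then obtain T where "\<forall>t\<ge>T. hsdist (S t ` B) X < ennreal e" by (auto simp: eventually_at_top_linorder)
  then show ?thesis by (meson hsdist_lt imageI)
qed

lemma sup_recur_bound:
  fixes x :: "int \<Rightarrow> real"
  assumes "\<And>n. x n \<le> B" "0 \<le> c" "c < 1" "\<And>n. x n \<le> c * x (n - p) + b"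
  shows "x n \<le> b / (1 - c)"
proof -
  let ?S = "Sup (range x)"
  have bdd: "bdd_above (range x)" using assms(1) by (intro bdd_aboveI2) auto
  have "x m \<le> c * ?S + b" for m
  proof -
    have "x (m-p) \<le> ?S" using bdd by (simp add: cSup_upper)
    then have "c * x (m-p) \<le> c * ?S" using assms(2) by (rule mult_left_mono)
    then show ?thesis using assms(4)[of m] by linarith
  qed
  then have "?S \<le> c * ?S + b" by (intro cSup_least) auto
  then have "?S \<le> b/(1-c)" using assms by (simp add: field_simps)
  moreover have "x n \<le> ?S" using bdd by (simp add: cSup_upper)
  ultimately show ?thesis by linarith
qed

lemma biinf_orbit:
  assumes "T ` X = X" "x \<in> X"
  obtains w :: "int \<Rightarrow> 'b" where "w 0 = x" "\<And>n. w n \<in> X" "\<And>n. T (w n) = w (n+1)"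
proof -
  have "\<forall>y\<in>X. \<exists>z\<in>X. T z = y" using assms(1) by (metis imageE)
  then obtain p where p: "\<And>y. y \<in> X \<Longrightarrow> p y \<in> X \<and> T (p y) = y" by metis
  define w where "w n = (if n \<ge> 0 then (T ^^ nat n) x else (p ^^ nat (-n)) x)" for n
  have TX: "T y \<in> X" if "y \<in> X" for y using assms(1) that by blast
  have fX: "(T ^^ m) x \<in> X" for m by (induction m) (use assms TX in auto)
  have pX: "(p ^^ m) x \<in> X" for m by (induction m) (use assms p in auto)
  show ?thesis
  proof (rule that)
    show "w 0 = x" by (simp add: w_def)
    show "w n \<in> X" for n using fX pX by (simp add: w_def)
    show "T (w n) = w (n+1)" for n
    proof (cases "n \<ge> 0")
      case True then show ?thesis by (simp add: w_def nat_add_distrib)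
    next
      case False
      then have m: "n = - int (Suc (nat (-n-1)))" by simp
      define m where "m = nat (-n-1)"
      have m: "n = - int (Suc m)" using m m_def by simp
      show ?thesis
      proof (cases m)
        case 0 then show ?thesis using m p assms(2) by (simp add: w_def)
      next
        case (Suc m')
        have "w n = p ((p ^^ Suc m') x)" using m Suc by (simp add: w_def nat_add_distrib)
        moreover have "w (n+1) = (p ^^ Suc m') x" using m Suc by (simp add: w_def nat_add_distrib)
        ultimately show ?thesis using p pX by simp
      qed
    qed
  qed
qed


lemma loclip_compact:
  fixes g :: "'b::metric_space \<Rightarrow> 'c::metric_space"
  assumes "locally_lipschitz g" "compact K"
  shows "\<exists>L\<ge>0. \<forall>y\<in>K. \<forall>z\<in>K. dist (g y) (g z) \<le> L * dist y z"
proof -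
  obtain r Lf where rL: "\<And>x. r x > 0" "\<And>x y z. y \<in> ball x (r x) \<Longrightarrow> z \<in> ball x (r x) \<Longrightarrow> dist (g y) (g z) \<le> Lf x * dist y z"
    using assms(1) unfolding locally_lipschitz_def by metis
  have cont: "continuous_on K g"
  proof (intro continuous_at_imp_continuous_on ballI)
    fix x show "isCont g x"
      unfolding continuous_at
    proof (rule metric_LIM_I)
      fix e :: real assume e: "e > 0"
      define s where "s = min (r x) (e / (\<bar>Lf x\<bar> + 1))"
      have s: "s > 0" using rL(1)[of x] e by (simp add: s_def)
      have "dist (g y) (g x) < e" if "dist y x < s" for y
      proof -
        have "y \<in> ball x (r x)" using that by (simp add: s_def dist_commute)
        then have "dist (g y) (g x) \<le> Lf x * dist y x" using rL(2)[of y x x] rL(1)[of x] by simp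
        also have "\<dots> \<le> \<bar>Lf x\<bar> * dist y x" by (simp add: mult_right_mono)
        also have "\<dots> \<le> \<bar>Lf x\<bar> * s" using that by (simp add: mult_left_mono)
        also have "\<dots> < (\<bar>Lf x\<bar> + 1) * (e / (\<bar>Lf x\<bar> + 1))"
        proof -
          have "s \<le> e / (\<bar>Lf x\<bar> + 1)" by (simp add: s_def)
          then have "\<bar>Lf x\<bar> * s \<le> \<bar>Lf x\<bar> * (e / (\<bar>Lf x\<bar> + 1))" by (intro mult_left_mono) auto
          also have "\<dots> < (\<bar>Lf x\<bar> + 1) * (e / (\<bar>Lf x\<bar> + 1))"
            using e by (intro mult_strict_right_mono) auto
          finally show ?thesis .
        qed
        also have "\<dots> = e" by simp
        finally show ?thesis .
      qed
      then show "\<exists>s>0. \<forall>y. y \<noteq> x \<and> dist y x < s \<longrightarrow> dist (g y) (g x) < e" using s by blast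
    qed
  qed
  have "bounded (g ` K)" using compact_continuous_image[OF cont assms(2)] compact_imp_bounded by blast
  then obtain Mb where Mb: "\<And>a b. a \<in> g ` K \<Longrightarrow> b \<in> g ` K \<Longrightarrow> dist a b \<le> Mb"
    unfolding bounded_two_points by blast
  have "K \<subseteq> (\<Union>x\<in>K. ball x (r x))" using rL(1) by auto
  then obtain D where D: "D \<subseteq> K" "finite D" "K \<subseteq> (\<Union>x\<in>D. ball x (r x))"
    using compactE_image[OF assms(2), of K "\<lambda>x. ball x (r x)"] by auto
  obtain e where e: "e > 0" "\<And>x. x \<in> K \<Longrightarrow> \<exists>G\<in>(\<lambda>x. ball x (r x)) ` D. ball x e \<subseteq> G"
    using Heine_Borel_lemma[OF assms(2) D(3)] by auto
  define L where "L = max (Max (insert 0 (Lf ` D))) (Mb / e)"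
  have L0: "L \<ge> 0" unfolding L_def using D(2) by (simp add: le_max_iff_disj)
  have LD: "Lf x \<le> L" if "x \<in> D" for x
    unfolding L_def using D(2) that by (simp add: le_max_iff_disj)
  have "\<forall>y\<in>K. \<forall>z\<in>K. dist (g y) (g z) \<le> L * dist y z"
  proof (intro ballI)
    fix y z assume yz: "y \<in> K" "z \<in> K"
    show "dist (g y) (g z) \<le> L * dist y z"
    proof (cases "dist y z < e")
      case True
      obtain x where x: "x \<in> D" "ball y e \<subseteq> ball x (r x)" using e(2)[OF yz(1)] by auto
      have "y \<in> ball x (r x)" "z \<in> ball x (r x)" using x(2) e(1) True by (auto simp: subset_iff)
      then have "dist (g y) (g z) \<le> Lf x * dist y z" by (rule rL(2))
      also have "\<dots> \<le> L * dist y z" using LD[OF x(1)] by (simp add: mult_right_mono)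
      finally show ?thesis .
    next
      case False
      have "dist (g y) (g z) \<le> Mb" using Mb yz by blast
      also have "Mb = (Mb / e) * e" using e(1) by simp
      also have "\<dots> \<le> (Mb / e) * dist y z"
      proof -
        have "0 \<le> Mb" using Mb[of "g y" "g y"] yz by simp
        then show ?thesis using False e(1) by (intro mult_left_mono) auto
      qed
      also have "\<dots> \<le> L * dist y z" unfolding L_def by (intro mult_right_mono) auto
      finally show ?thesis .
    qed
  qed
  then show ?thesis using L0 by blast
qed

locale sys =
  fixes A N :: "'a::euclidean_space \<Rightarrow> 'a" and F :: 'a and \<gamma> l0 :: real
  assumes A_lin: "bounded_linear A"
    and l0_pos: "l0 > 0"
    and A_coercive: "\<forall>u. A u \<bullet> u \<ge> l0 * (norm u)\<^sup>2"
    and N_loclip: "locally_lipschitz N"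
    and N_orth: "\<forall>u. N u \<bullet> u = 0"
    and gamma_pos: "\<gamma> > 0"
begin

definition f :: "'a \<times> real \<Rightarrow> 'a \<times> real" where "f = aug_field A N F \<gamma>"

lemma f_simp: "f (u, q) = (F - A u - q *\<^sub>R N u, N u \<bullet> u - \<gamma> * q + \<gamma>)"
  by (simp add: f_def aug_field_def)

lemma N_lip: "\<exists>L\<ge>0. \<forall>y z. norm y \<le> R \<longrightarrow> norm z \<le> R \<longrightarrow> norm (N y - N z) \<le> L * norm (y - z)"
  using loclip_compact[OF N_loclip compact_cball[of 0 R]] by (auto simp: dist_norm)

lemma N_bnd: "\<exists>M\<ge>0. \<forall>y. norm y \<le> R \<longrightarrow> norm (N y) \<le> M"
proof -
  obtain L where L: "L \<ge> 0" "\<forall>y z. norm y \<le> R \<longrightarrow> norm z \<le> R \<longrightarrow> norm (N y - N z) \<le> L * norm (y - z)"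
    using N_lip by blast
  have "norm (N y) \<le> norm (N 0) + L * \<bar>R\<bar>" if "norm y \<le> R" for y
  proof -
    have "norm (N y - N 0) \<le> L * norm y" using L(2) that by (metis diff_zero norm_ge_zero norm_zero order_trans)
    also have "\<dots> \<le> L * \<bar>R\<bar>" using L(1) that by (intro mult_left_mono) auto
    finally show ?thesis by (metis add.commute norm_triangle_sub order_trans add_left_mono)
  qed
  then show ?thesis by (intro exI[of _ "norm (N 0) + L * \<bar>R\<bar>"]) (auto intro!: add_nonneg_nonneg mult_nonneg_nonneg L(1))
qed

lemma A_bnd: "\<exists>KA\<ge>0. \<forall>u. norm (A u) \<le> KA * norm u"
  using bounded_linear.nonneg_bounded[OF A_lin] by (metis mult.commute)

lemma A_diff: "A u - A v = A (u - v)"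
  by (metis A_lin bounded_linear.linear linear_diff)

end

lemma lip_bnd:
  fixes g :: "'b::real_normed_vector \<Rightarrow> 'c::real_normed_vector"
  assumes "L \<ge> 0" "\<forall>y z. norm y \<le> R \<longrightarrow> norm z \<le> R \<longrightarrow> norm (g y - g z) \<le> L * norm (y - z)"
  shows "\<exists>M\<ge>0. \<forall>y. norm y \<le> R \<longrightarrow> norm (g y) \<le> M"
proof -
  have "norm (g y) \<le> norm (g 0) + L * \<bar>R\<bar>" if "norm y \<le> R" for y
  proof -
    have "norm (g y - g 0) \<le> L * norm y" using assms(2) that by (metis diff_zero norm_ge_zero norm_zero order_trans)
    also have "\<dots> \<le> L * \<bar>R\<bar>" using assms(1) that by (intro mult_left_mono) auto
    finally show ?thesis by (metis add.commute norm_triangle_sub order_trans add_left_mono)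
  qed
  then show ?thesis by (intro exI[of _ "norm (g 0) + L * \<bar>R\<bar>"]) (auto intro!: add_nonneg_nonneg mult_nonneg_nonneg assms(1))
qed

lemma norm_Pair_sq: "(norm (u, q))\<^sup>2 = (norm u)\<^sup>2 + (norm q)\<^sup>2"
  by (simp add: norm_Pair)

context sys begin

lemma f_lip: "\<exists>L\<ge>0. \<forall>x y. norm x \<le> R \<longrightarrow> norm y \<le> R \<longrightarrow> norm (f x - f y) \<le> L * norm (x - y)"
proof -
  obtain LN where LN: "LN \<ge> 0" "\<forall>y z. norm y \<le> R \<longrightarrow> norm z \<le> R \<longrightarrow> norm (N y - N z) \<le> LN * norm (y - z)" using N_lip by blast
  obtain MN where MN: "MN \<ge> 0" "\<forall>y. norm y \<le> R \<longrightarrow> norm (N y) \<le> MN" using N_bnd by blast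
  obtain KA where KA: "KA \<ge> 0" "\<forall>u. norm (A u) \<le> KA * norm u" using A_bnd by blast
  define L where "L = KA + 2 * \<bar>R\<bar> * LN + 2 * MN + \<gamma>"
  have "norm (f x - f y) \<le> L * norm (x - y)" if xy: "norm x \<le> R" "norm y \<le> R" for x y
  proof -
    obtain u q where x: "x = (u,q)" by (cases x)
    obtain v p where y: "y = (v,p)" by (cases y)
    define d where "d = norm (x - y)"
    have nu: "norm u \<le> R" "norm v \<le> R" "\<bar>q\<bar> \<le> R"
      using xy x y norm_fst_le[of u q] norm_snd_le[of q u] norm_fst_le[of v p] by auto
    have Rabs: "norm u \<le> \<bar>R\<bar>" "\<bar>q\<bar> \<le> \<bar>R\<bar>" using nu by auto
    have xmy: "x - y = (u - v, q - p)" by (simp add: x y)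
    have d0: "0 \<le> d" by (simp add: d_def)
    have duv: "norm (u - v) \<le> d" unfolding d_def xmy by (rule norm_fst_le)
    have dqp: "\<bar>q - p\<bar> \<le> d" unfolding d_def xmy using norm_snd_le[of "q - p" "u - v"] by simp
    have NN0: "norm (N u - N v) \<le> LN * norm (u - v)" using LN(2) nu by blast
    have NN: "norm (N u - N v) \<le> LN * d"
      using NN0 mult_left_mono[OF duv LN(1)] by linarith
    have Nv: "norm (N v) \<le> MN" using MN nu by blast
    have e1: "norm (A u - A v) \<le> KA * d"
      using spec[OF KA(2), of "u - v"] mult_left_mono[OF duv KA(1)] unfolding A_diff by linarith
    have e2: "norm (q *\<^sub>R N u - p *\<^sub>R N v) \<le> \<bar>R\<bar> * (LN * d) + d * MN"
    proof -
      have eqq: "q *\<^sub>R N u - p *\<^sub>R N v = q *\<^sub>R (N u - N v) + (q - p) *\<^sub>R N v" by (simp add: algebra_simps)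
      have "norm (q *\<^sub>R N u - p *\<^sub>R N v) \<le> norm (q *\<^sub>R (N u - N v)) + norm ((q - p) *\<^sub>R N v)"
        unfolding eqq by (rule norm_triangle_ineq)
      then have "norm (q *\<^sub>R N u - p *\<^sub>R N v) \<le> \<bar>q\<bar> * norm (N u - N v) + \<bar>q - p\<bar> * norm (N v)"
        by simp
      also have "\<dots> \<le> \<bar>R\<bar> * (LN * d) + d * MN"
        using mult_mono[OF Rabs(2) NN abs_ge_zero norm_ge_zero] mult_mono[OF dqp Nv d0 norm_ge_zero] by linarith
      finally show ?thesis .
    qed
    have e3: "\<bar>N u \<bullet> u - N v \<bullet> v\<bar> \<le> (LN * d) * \<bar>R\<bar> + MN * d"
    proof -
      have "N u \<bullet> u - N v \<bullet> v = (N u - N v) \<bullet> u + N v \<bullet> (u - v)" by (simp add: inner_diff_left inner_diff_right)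
      moreover have "\<bar>(N u - N v) \<bullet> u + N v \<bullet> (u - v)\<bar> \<le> \<bar>(N u - N v) \<bullet> u\<bar> + \<bar>N v \<bullet> (u - v)\<bar>"
        by (rule abs_triangle_ineq)
      moreover have "\<bar>(N u - N v) \<bullet> u\<bar> \<le> norm (N u - N v) * norm u" by (rule Cauchy_Schwarz_ineq2)
      moreover have "\<bar>N v \<bullet> (u - v)\<bar> \<le> norm (N v) * norm (u - v)" by (rule Cauchy_Schwarz_ineq2)
      ultimately have "\<bar>N u \<bullet> u - N v \<bullet> v\<bar> \<le> norm (N u - N v) * norm u + norm (N v) * norm (u - v)"
        by linarith
      also have "\<dots> \<le> (LN * d) * \<bar>R\<bar> + MN * d"
        using mult_mono[OF NN Rabs(1) _ norm_ge_zero] mult_mono[OF Nv duv MN(1) norm_ge_zero] LN(1) d0 by (simp add: add_mono)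
      finally show ?thesis .
    qed
    have e4: "\<bar>\<gamma> * q - \<gamma> * p\<bar> \<le> \<gamma> * d"
    proof -
      have "\<bar>\<gamma> * q - \<gamma> * p\<bar> = \<gamma> * \<bar>q - p\<bar>" using gamma_pos by (simp add: abs_mult right_diff_distrib[symmetric])
      also have "\<dots> \<le> \<gamma> * d" using dqp gamma_pos by (simp add: mult_left_mono)
      finally show ?thesis .
    qed
    have fxy: "f x - f y = (- (A u - A v) - (q *\<^sub>R N u - p *\<^sub>R N v), (N u \<bullet> u - N v \<bullet> v) - (\<gamma> * q - \<gamma> * p))"
      by (simp add: x y f_simp algebra_simps)
    have "norm (f x - f y) \<le> norm (- (A u - A v) - (q *\<^sub>R N u - p *\<^sub>R N v)) + norm ((N u \<bullet> u - N v \<bullet> v) - (\<gamma> * q - \<gamma> * p))"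
      unfolding fxy by (rule norm_Pair_le)
    also have "\<dots> \<le> (norm (A u - A v) + norm (q *\<^sub>R N u - p *\<^sub>R N v)) + (\<bar>N u \<bullet> u - N v \<bullet> v\<bar> + \<bar>\<gamma> * q - \<gamma> * p\<bar>)"
    proof (rule add_mono)
      show "norm (- (A u - A v) - (q *\<^sub>R N u - p *\<^sub>R N v)) \<le> norm (A u - A v) + norm (q *\<^sub>R N u - p *\<^sub>R N v)"
        using norm_triangle_ineq4[of "-(A u - A v)" "q *\<^sub>R N u - p *\<^sub>R N v"] by (simp only: norm_minus_cancel)
      show "norm ((N u \<bullet> u - N v \<bullet> v) - (\<gamma> * q - \<gamma> * p)) \<le> \<bar>N u \<bullet> u - N v \<bullet> v\<bar> + \<bar>\<gamma> * q - \<gamma> * p\<bar>"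
        unfolding real_norm_def by (rule abs_triangle_ineq4)
    qed
    also have "\<dots> \<le> (KA * d + (\<bar>R\<bar> * (LN * d) + d * MN)) + ((LN * d) * \<bar>R\<bar> + MN * d + \<gamma> * d)"
      by (intro add_mono e1 e2 e3 e4)
    also have "\<dots> = L * d" by (simp add: L_def algebra_simps)
    finally show ?thesis by (simp add: d_def)
  qed
  moreover have "L \<ge> 0" using KA LN MN gamma_pos by (simp add: L_def)
  ultimately show ?thesis by blast
qed

lemma f_bnd: "\<exists>M\<ge>0. \<forall>x. norm x \<le> R \<longrightarrow> norm (f x) \<le> M"
  using f_lip[of R] lip_bnd by blast

lemma nse_lip: "\<exists>L\<ge>0. \<forall>x y. norm x \<le> R \<longrightarrow> norm y \<le> R \<longrightarrow> norm (nse_field A N F x - nse_field A N F y) \<le> L * norm (x - y)"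
proof -
  obtain LN where LN: "LN \<ge> 0" "\<forall>y z. norm y \<le> R \<longrightarrow> norm z \<le> R \<longrightarrow> norm (N y - N z) \<le> LN * norm (y - z)" using N_lip by blast
  obtain KA where KA: "KA \<ge> 0" "\<forall>u. norm (A u) \<le> KA * norm u" using A_bnd by blast
  have "norm (nse_field A N F x - nse_field A N F y) \<le> (KA + LN) * norm (x - y)" if "norm x \<le> R" "norm y \<le> R" for x y
  proof -
    have "nse_field A N F x - nse_field A N F y = - (A x - A y) - (N x - N y)" by (simp add: nse_field_def algebra_simps)
    then have "norm (nse_field A N F x - nse_field A N F y) \<le> norm (A x - A y) + norm (N x - N y)"
      by (metis norm_minus_cancel norm_triangle_ineq4)
    also have "\<dots> \<le> KA * norm (x - y) + LN * norm (x - y)"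
      using spec[OF KA(2), of "x - y"] LN(2) that by (intro add_mono) (auto simp: A_diff)
    finally show ?thesis by (simp add: algebra_simps)
  qed
  then show ?thesis using KA LN by (intro exI[of _ "KA + LN"]) auto
qed

definition c0 :: real where "c0 = min l0 \<gamma> / 2"
definition C0 :: real where "C0 = (norm F)\<^sup>2 / (2 * l0) + \<gamma> / 2"

lemma c0_pos: "c0 > 0" using l0_pos gamma_pos by (simp add: c0_def)
lemma C0_nonneg: "C0 \<ge> 0" using l0_pos gamma_pos by (simp add: C0_def)

lemma energy_ineq:
  "(F - A u - q *\<^sub>R w) \<bullet> u + (w \<bullet> u - \<gamma> * q + \<gamma>) * q \<le> C0 - c0 * ((norm u)\<^sup>2 + q\<^sup>2)"
proof -
  have lhs: "(F - A u - q *\<^sub>R w) \<bullet> u + (w \<bullet> u - \<gamma> * q + \<gamma>) * q = F \<bullet> u - A u \<bullet> u - \<gamma> * q\<^sup>2 + \<gamma> * q"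
    by (simp add: inner_diff_left algebra_simps power2_eq_square)
  have "F \<bullet> u \<le> norm F * norm u" by (rule norm_cauchy_schwarz)
  also have "\<dots> \<le> (norm F)\<^sup>2 / (2 * l0) + l0 / 2 * (norm u)\<^sup>2"
  proof -
    have "0 \<le> (norm F - l0 * norm u)\<^sup>2" by simp
    then have "2 * l0 * (norm F * norm u) \<le> (norm F)\<^sup>2 + l0\<^sup>2 * (norm u)\<^sup>2"
      by (simp add: power2_diff power_mult_distrib algebra_simps)
    then show ?thesis using l0_pos by (simp add: field_simps power2_eq_square)
  qed
  finally have t1: "F \<bullet> u \<le> (norm F)\<^sup>2 / (2 * l0) + l0 / 2 * (norm u)\<^sup>2" .
  have t2: "A u \<bullet> u \<ge> l0 * (norm u)\<^sup>2" using A_coercive by blast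
  have t3: "\<gamma> * q \<le> \<gamma> / 2 + \<gamma> / 2 * q\<^sup>2"
  proof -
    have "0 \<le> \<gamma> * (q - 1)\<^sup>2" using gamma_pos by simp
    then show ?thesis by (simp add: power2_diff algebra_simps)
  qed
  have t4: "c0 * ((norm u)\<^sup>2 + q\<^sup>2) \<le> l0 / 2 * (norm u)\<^sup>2 + \<gamma> / 2 * q\<^sup>2"
  proof -
    have "c0 * (norm u)\<^sup>2 \<le> l0 / 2 * (norm u)\<^sup>2" by (intro mult_right_mono) (auto simp: c0_def)
    moreover have "c0 * q\<^sup>2 \<le> \<gamma> / 2 * q\<^sup>2" by (intro mult_right_mono) (auto simp: c0_def)
    ultimately show ?thesis by (simp add: algebra_simps)
  qed
  show ?thesis unfolding lhs using t1 t2 t3 t4 by (simp add: C0_def)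
qed

lemma energy_f: "x \<bullet> f x \<le> C0 - c0 * (norm x)\<^sup>2"
proof -
  obtain u q where x: "x = (u, q)" by (cases x)
  have "x \<bullet> f x = (F - A u - q *\<^sub>R N u) \<bullet> u + (N u \<bullet> u - \<gamma> * q + \<gamma>) * q"
    by (simp add: x f_simp inner_commute)
  also have "\<dots> \<le> C0 - c0 * ((norm u)\<^sup>2 + q\<^sup>2)" by (rule energy_ineq)
  also have "(norm u)\<^sup>2 + q\<^sup>2 = (norm x)\<^sup>2" by (simp add: x norm_Pair_sq)
  finally show ?thesis .
qed

end

lemma sup_recur_bound2:
  fixes x :: "int \<Rightarrow> real"
  assumes "\<And>n. x n \<le> B" "a > 0" "\<And>n. x n * (1 + a) \<le> x (n - p) + b"
  shows "x n \<le> b / a"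
proof -
  let ?S = "Sup (range x)"
  have bdd: "bdd_above (range x)" using assms(1) by (intro bdd_aboveI2) auto
  have "x m * (1 + a) \<le> ?S + b" for m
  proof -
    have "x (m-p) \<le> ?S" using bdd by (simp add: cSup_upper)
    then show ?thesis using assms(3)[of m] by linarith
  qed
  then have "x m \<le> (?S + b) / (1 + a)" for m using assms(2) by (simp add: field_simps)
  then have "?S \<le> (?S + b) / (1 + a)" by (intro cSup_least) auto
  then have "?S \<le> b / a" using assms(2) by (simp add: field_simps)
  moreover have "x n \<le> ?S" using bdd by (simp add: cSup_upper)
  ultimately show ?thesis by linarith
qed

lemma vec_move: fixes a b d F :: "'b::ab_group_add" shows "a + b + d = F \<longleftrightarrow> a = F - b - d"
  by (simp add: diff_diff_eq eq_diff_eq add.assoc)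

lemma vec_move2: fixes P Z b d F :: "'b::ab_group_add" shows "(P - Z) + b + d = F \<longleftrightarrow> P + b + d = F + Z"
  by (simp add: add.assoc diff_add_eq diff_eq_eq)

lemma bdf2_identity:
  fixes a b c :: "'b::real_inner"
  shows "2 * ((3 *\<^sub>R a - 4 *\<^sub>R b + c) \<bullet> a) = (norm a)\<^sup>2 + (norm (2 *\<^sub>R a - b))\<^sup>2 - (norm b)\<^sup>2 - (norm (2 *\<^sub>R b - c))\<^sup>2 + (norm (a - 2 *\<^sub>R b + c))\<^sup>2"
  unfolding power2_norm_eq_inner
  by (simp add: inner_diff_left inner_diff_right inner_add_left inner_add_right inner_commute[of b a] inner_commute[of c a] inner_commute[of c b] algebra_simps)

context sys begin

definition Gk :: "'a \<times> real \<Rightarrow> 'a \<times> real \<Rightarrow> 'a \<times> real \<Rightarrow> 'a \<times> real" where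
  "Gk z0 z1 z2 = (F - A (fst z2) - snd z2 *\<^sub>R N (2 *\<^sub>R fst z1 - fst z0),
                  N (2 *\<^sub>R fst z1 - fst z0) \<bullet> fst z2 - \<gamma> * snd z2 + \<gamma>)"

lemma bdf2_vec:
  assumes "k > 0"
  shows "bdf2_eqs A N F \<gamma> k (fst z0) (snd z0) (fst z1) (snd z1) (fst z2) (snd z2) \<longleftrightarrow>
         3 *\<^sub>R z2 - 4 *\<^sub>R z1 + z0 = (2 * k) *\<^sub>R Gk z0 z1 z2"
proof -
  define X where "X = 3 *\<^sub>R fst z2 - 4 *\<^sub>R fst z1 + fst z0"
  define w where "w = N (2 *\<^sub>R fst z1 - fst z0)"
  define Y where "Y = F - A (fst z2) - snd z2 *\<^sub>R w"
  have e1: "(1 / (2 * k)) *\<^sub>R X + A (fst z2) + snd z2 *\<^sub>R w = F \<longleftrightarrow> X = (2 * k) *\<^sub>R Y"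
  proof -
    have "(1 / (2 * k)) *\<^sub>R X + A (fst z2) + snd z2 *\<^sub>R w = F \<longleftrightarrow> (1 / (2 * k)) *\<^sub>R X = Y"
      unfolding Y_def by (rule vec_move)
    also have "\<dots> \<longleftrightarrow> X = (2 * k) *\<^sub>R Y"
    proof
      assume h: "(1 / (2 * k)) *\<^sub>R X = Y"
      have "X = (2 * k) *\<^sub>R ((1 / (2 * k)) *\<^sub>R X)" using assms by simp
      then show "X = (2 * k) *\<^sub>R Y" using h by simp
    next
      assume "X = (2 * k) *\<^sub>R Y"
      then show "(1 / (2 * k)) *\<^sub>R X = Y" using assms by simp
    qed
    finally show ?thesis .
  qed
  have e2: "(3 * snd z2 - 4 * snd z1 + snd z0) / (2 * k) + \<gamma> * snd z2 - w \<bullet> fst z2 = \<gamma> \<longleftrightarrow>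
      3 * snd z2 - 4 * snd z1 + snd z0 = (2 * k) * (w \<bullet> fst z2 - \<gamma> * snd z2 + \<gamma>)"
    using assms by (auto simp: field_simps)
  show ?thesis
    unfolding bdf2_eqs_def Gk_def prod_eq_iff
    using e1 e2 by (simp add: X_def Y_def w_def)
qed

lemma bdf2_unique:
  assumes "k > 0"
  shows "\<exists>!p. bdf2_eqs A N F \<gamma> k u0 q0 u1 q1 (fst p) (snd p)"
proof -
  define w where "w = N (2 *\<^sub>R u1 - u0)"
  define Lm :: "'a \<times> real \<Rightarrow> 'a \<times> real" where
    "Lm x = ((3 / (2 * k)) *\<^sub>R fst x + A (fst x) + snd x *\<^sub>R w, (3 / (2 * k)) * snd x + \<gamma> * snd x - w \<bullet> fst x)" for x
  define rhs where "rhs = (F + (1 / (2 * k)) *\<^sub>R (4 *\<^sub>R u1 - u0), \<gamma> + (4 * q1 - q0) / (2 * k))"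
  have eq: "bdf2_eqs A N F \<gamma> k u0 q0 u1 q1 (fst p) (snd p) \<longleftrightarrow> Lm p = rhs" for p
  proof -
    have a: "(1 / (2 * k)) *\<^sub>R (3 *\<^sub>R fst p - 4 *\<^sub>R u1 + u0) + A (fst p) + snd p *\<^sub>R w = F \<longleftrightarrow>
        (3 / (2 * k)) *\<^sub>R fst p + A (fst p) + snd p *\<^sub>R w = F + (1 / (2 * k)) *\<^sub>R (4 *\<^sub>R u1 - u0)"
    proof -
      have "(1 / (2 * k)) *\<^sub>R (3 *\<^sub>R fst p - 4 *\<^sub>R u1 + u0) = (3 / (2 * k)) *\<^sub>R fst p - (1 / (2 * k)) *\<^sub>R (4 *\<^sub>R u1 - u0)"
        by (simp add: algebra_simps)
      then show ?thesis by (simp only: vec_move2)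
    qed
    have b: "(3 * snd p - 4 * q1 + q0) / (2 * k) + \<gamma> * snd p - w \<bullet> fst p = \<gamma> \<longleftrightarrow>
        (3 / (2 * k)) * snd p + \<gamma> * snd p - w \<bullet> fst p = \<gamma> + (4 * q1 - q0) / (2 * k)"
      using assms by (auto simp: field_simps)
    show ?thesis unfolding bdf2_eqs_def Lm_def rhs_def prod_eq_iff using a b by (simp add: w_def)
  qed
  have linA: "linear A" using A_lin bounded_linear.linear by blast
  have lin: "linear Lm"
    proof (rule linearI)
    fix x y show "Lm (x + y) = Lm x + Lm y"
      by (simp add: Lm_def prod_eq_iff linear_add[OF linA] inner_add_right scaleR_add_right scaleR_add_left distrib_left)
  next
    fix r x show "Lm (r *\<^sub>R x) = r *\<^sub>R Lm x"
      apply (simp add: Lm_def prod_eq_iff linear_scale[OF linA] scaleR_add_right right_diff_distrib)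
      by (simp add: algebra_simps)
  qed
  have inj: "inj Lm"
    unfolding linear_injective_0[OF lin]
  proof (intro allI impI)
    fix x assume h: "Lm x = 0"
    obtain u q where x: "x = (u, q)" by (cases x)
    have h1: "(3 / (2 * k)) *\<^sub>R u + A u + q *\<^sub>R w = 0" and h2: "(3 / (2 * k)) * q + \<gamma> * q - w \<bullet> u = 0"
      using h by (auto simp: Lm_def x prod_eq_iff)
    have "((3 / (2 * k)) *\<^sub>R u + A u + q *\<^sub>R w) \<bullet> u + ((3 / (2 * k)) * q + \<gamma> * q - w \<bullet> u) * q = 0"
      using h1 h2 by simp
    then have s: "(3 / (2 * k)) * (u \<bullet> u) + A u \<bullet> u + ((3 / (2 * k)) + \<gamma>) * q\<^sup>2 = 0"
      by (simp add: inner_add_left algebra_simps power2_eq_square)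
    have p1: "(3 / (2 * k)) * (u \<bullet> u) \<ge> 0" using assms by simp
    have p2: "A u \<bullet> u \<ge> 0"
    proof -
      have "0 \<le> l0 * (norm u)\<^sup>2" using l0_pos by simp
      then show ?thesis using spec[OF A_coercive, of u] by linarith
    qed
    have p3: "((3 / (2 * k)) + \<gamma>) * q\<^sup>2 \<ge> 0" using assms gamma_pos by simp
    have "(3 / (2 * k)) * (u \<bullet> u) = 0" "((3 / (2 * k)) + \<gamma>) * q\<^sup>2 = 0" using s p1 p2 p3 by linarith+
    moreover have pos3: "3 / (2 * k) + \<gamma> > 0" using assms gamma_pos by (intro add_pos_pos) auto
    ultimately have "u = 0" "q = 0" using assms by auto
    then show "x = 0" by (simp add: x zero_prod_def)
  qed
  have "surj Lm" by (rule linear_inj_imp_surj[OF lin inj])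
  then obtain p where "Lm p = rhs" by (metis surjD)
  then have "\<exists>!p. Lm p = rhs" using inj by (auto dest: injD)
  then show ?thesis using eq by simp
qed

lemma bdf2_map_step:
  assumes "k > 0"
  shows "fst (bdf2_map A N F \<gamma> k (z0, z1)) = z1 \<and>
    3 *\<^sub>R snd (bdf2_map A N F \<gamma> k (z0, z1)) - 4 *\<^sub>R z1 + z0 = (2 * k) *\<^sub>R Gk z0 z1 (snd (bdf2_map A N F \<gamma> k (z0, z1)))"
proof -
  obtain u0 q0 u1 q1 where z: "z0 = (u0, q0)" "z1 = (u1, q1)" by (cases z0, cases z1) auto
  define p where "p = (THE p. bdf2_eqs A N F \<gamma> k u0 q0 u1 q1 (fst p) (snd p))"
  have m: "bdf2_map A N F \<gamma> k (z0, z1) = (z1, p)" by (simp add: bdf2_map_def z p_def)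
  have "bdf2_eqs A N F \<gamma> k u0 q0 u1 q1 (fst p) (snd p)"
    unfolding p_def by (rule theI'[OF bdf2_unique[OF assms]])
  then have "3 *\<^sub>R p - 4 *\<^sub>R z1 + z0 = (2 * k) *\<^sub>R Gk z0 z1 p"
    using bdf2_vec[OF assms, of z0 z1 p] by (simp add: z)
  then show ?thesis by (simp add: m)
qed

definition orb :: "real \<Rightarrow> (int \<Rightarrow> 'a \<times> real) \<Rightarrow> bool" where
  "orb k z \<longleftrightarrow> (\<forall>n. 3 *\<^sub>R z (n + 2) - 4 *\<^sub>R z (n + 1) + z n = (2 * k) *\<^sub>R Gk (z n) (z (n + 1)) (z (n + 2)))"

lemma orbit_exists:
  assumes "k > 0" "global_attractor_map (bdf2_map A N F \<gamma> k) X" "x \<in> X"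
  obtains z B where "orb k z" "\<And>n. norm (z n) \<le> B" "z 0 = fst x" "z 1 = snd x" "\<And>n. (z n, z (n + 1)) \<in> X"
proof -
  let ?T = "bdf2_map A N F \<gamma> k"
  have TX: "?T ` X = X" and cX: "compact X" using assms(2) unfolding global_attractor_map_def by auto
  obtain w :: "int \<Rightarrow> _" where w: "w 0 = x" "\<And>n. w n \<in> X" "\<And>n. ?T (w n) = w (n + 1)"
    using biinf_orbit[OF TX assms(3)] by blast
  define z :: "int \<Rightarrow> 'a \<times> real" where "z n = fst (w n)" for n
  have snd_w: "snd (w n) = z (n + 1)" for n
    using bdf2_map_step[OF assms(1), of "fst (w n)" "snd (w n)"] w(3)[of n] by (simp add: z_def)
  have wz: "w n = (z n, z (n + 1))" for n using snd_w[of n] by (simp add: z_def prod_eq_iff)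
  have "orb k z"
    unfolding orb_def
  proof
    fix n
    have "?T (z n, z (n + 1)) = (z (n + 1), z (n + 1 + 1))" using w(3)[of n] wz[of n] wz[of "n+1"] by simp
    then show "3 *\<^sub>R z (n + 2) - 4 *\<^sub>R z (n + 1) + z n = (2 * k) *\<^sub>R Gk (z n) (z (n + 1)) (z (n + 2))"
      using bdf2_map_step[OF assms(1), of "z n" "z (n + 1)"] by (simp add: add.assoc)
  qed
  moreover obtain B where B: "\<And>y. y \<in> X \<Longrightarrow> norm y \<le> B"
    using compact_imp_bounded[OF cX] unfolding bounded_iff by blast
  have "norm (z n) \<le> B" for n using B[OF w(2)[of n]] norm_fst_le[of "z n" "z (n + 1)"] wz[of n] by simp
  moreover have "z 0 = fst x" "z 1 = snd x" using w(1) wz[of 0] by auto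
  moreover have "(z n, z (n + 1)) \<in> X" for n using w(2)[of n] wz[of n] by simp
  ultimately show ?thesis using that by blast
qed

end

lemma real_mvt_le:
  fixes \<phi> :: "real \<Rightarrow> real"
  assumes ab: "a \<le> b"
    and d: "\<And>t. a \<le> t \<Longrightarrow> t \<le> b \<Longrightarrow> (\<phi> has_vector_derivative D t) (at t within {a..b})"
    and B: "\<And>t. a \<le> t \<Longrightarrow> t \<le> b \<Longrightarrow> D t \<le> B"
  shows "\<phi> b - \<phi> a \<le> B * (b - a)"
proof -
  have "\<exists>x\<in>{a..b}. \<phi> b - \<phi> a = (\<lambda>h. D x * h) (b - a)"
  proof (rule mvt_very_simple[OF ab])
    fix x assume "a \<le> x" "x \<le> b"
    then have "(\<phi> has_derivative (\<lambda>h. h *\<^sub>R D x)) (at x within {a..b})"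
      using d has_vector_derivative_def by blast
    moreover have "(\<lambda>h. h *\<^sub>R D x) = (\<lambda>h. D x * h)" by (auto simp: fun_eq_iff)
    ultimately show "(\<phi> has_derivative (\<lambda>h. D x * h)) (at x within {a..b})" by simp
  qed
  then obtain x where x: "x \<in> {a..b}" "\<phi> b - \<phi> a = D x * (b - a)" by auto
  have "D x * (b - a) \<le> B * (b - a)" using B[of x] x(1) ab by (intro mult_right_mono) auto
  then show ?thesis using x(2) by simp
qed

lemma sq_norm_growth:
  fixes y :: "real \<Rightarrow> 'b::real_inner"
  assumes d: "\<And>t. t \<ge> 0 \<Longrightarrow> (y has_vector_derivative y' t) (at t within {0..})"
    and e: "\<And>t. t \<ge> 0 \<Longrightarrow> y t \<bullet> y' t \<le> C" and t: "t \<ge> 0"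
  shows "(norm (y t))\<^sup>2 \<le> (norm (y 0))\<^sup>2 + 2 * C * t"
proof -
  have "y t \<bullet> y t - y 0 \<bullet> y 0 \<le> (2 * C) * (t - 0)"
  proof (rule real_mvt_le[OF t])
    fix s assume s: "0 \<le> s" "s \<le> t"
    have ds: "(y has_vector_derivative y' s) (at s within {0..t})"
      using has_vector_derivative_within_subset[OF d[of s]] s by auto
    show "((\<lambda>s. y s \<bullet> y s) has_vector_derivative (y s \<bullet> y' s + y' s \<bullet> y s)) (at s within {0..t})"
      by (rule bounded_bilinear.has_vector_derivative[OF bounded_bilinear_inner ds ds])
    show "y s \<bullet> y' s + y' s \<bullet> y s \<le> 2 * C" using e[of s] s by (simp add: inner_commute)
  qed
  then show ?thesis by (simp add: power2_norm_eq_inner)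
qed

lemma ode_lip_time:
  fixes y :: "real \<Rightarrow> 'b::real_normed_vector" and g :: "'b \<Rightarrow> 'b"
  assumes d: "\<And>t. t \<ge> 0 \<Longrightarrow> (y has_vector_derivative g (y t)) (at t within {0..})"
    and yb: "\<And>t. 0 \<le> t \<Longrightarrow> t \<le> Th \<Longrightarrow> norm (y t) \<le> R"
    and gb: "\<And>x. norm x \<le> R \<Longrightarrow> norm (g x) \<le> K"
    and st: "0 \<le> s" "s \<le> t" "t \<le> Th"
  shows "norm (y t - y s) \<le> 3 * K * (t - s)"
proof -
  have dS: "(y has_vector_derivative g (y x)) (at x within {s..t})" if "x \<in> {s..t}" for x
    using has_vector_derivative_within_subset[OF d[of x]] that st by auto
  have seg: "closed_segment s t \<subseteq> {s..t}" using st by (simp add: closed_segment_eq_real_ivl)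
  have gy: "norm (g (y x)) \<le> K" if "x \<in> {s..t}" for x using gb yb that st by auto
  have "norm (y t - y s - (t - s) *\<^sub>R g (y s)) \<le> norm (t - s) * (2 * K)"
  proof (rule vector_differentiable_bound_linearization[OF dS seg])
    fix x assume "x \<in> {s..t}"
    then have "norm (g (y x) - g (y s)) \<le> norm (g (y x)) + norm (g (y s))" "norm (g (y x)) \<le> K" "norm (g (y s)) \<le> K"
      using gy st by (auto intro: norm_triangle_ineq4)
    then show "norm (g (y x) - g (y s)) \<le> 2 * K" by linarith
  qed (use st in auto)
  moreover have "norm (y t - y s) \<le> norm (y t - y s - (t - s) *\<^sub>R g (y s)) + norm ((t - s) *\<^sub>R g (y s))"
    by (metis diff_add_cancel norm_triangle_ineq)
  moreover have "norm ((t - s) *\<^sub>R g (y s)) \<le> (t - s) * K"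
    using gy[of s] st by (simp add: mult_left_mono)
  moreover have "(t - s) * (2 * K) + (t - s) * K = 3 * K * (t - s)" by (simp add: algebra_simps)
  moreover have "norm (t - s) * (2 * K) = (t - s) * (2 * K)" using st by simp
  ultimately show ?thesis by linarith
qed

lemma ode_step:
  fixes y :: "real \<Rightarrow> 'b::real_normed_vector" and g :: "'b \<Rightarrow> 'b"
  assumes d: "\<And>t. t \<ge> 0 \<Longrightarrow> (y has_vector_derivative g (y t)) (at t within {0..})"
    and yb: "\<And>t. 0 \<le> t \<Longrightarrow> t \<le> Th \<Longrightarrow> norm (y t) \<le> R"
    and gl: "\<And>x x'. norm x \<le> R \<Longrightarrow> norm x' \<le> R \<Longrightarrow> norm (g x - g x') \<le> L * norm (x - x')"
    and gb: "\<And>x. norm x \<le> R \<Longrightarrow> norm (g x) \<le> K"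
    and st: "0 \<le> s" "s \<le> t" "t \<le> Th" and L0: "L \<ge> 0"
  shows "norm (y t - y s - (t - s) *\<^sub>R g (y s)) \<le> L * (3 * K) * (t - s) * (t - s)"
proof -
  have dS: "(y has_vector_derivative g (y x)) (at x within {s..t})" if "x \<in> {s..t}" for x
    using has_vector_derivative_within_subset[OF d[of x]] that st by auto
  have seg: "closed_segment s t \<subseteq> {s..t}" using st by (simp add: closed_segment_eq_real_ivl)
  have "norm (y t - y s - (t - s) *\<^sub>R g (y s)) \<le> norm (t - s) * (L * (3 * K) * (t - s))"
  proof (rule vector_differentiable_bound_linearization[OF dS seg])
    fix x assume x: "x \<in> {s..t}"
    have "norm (g (y x) - g (y s)) \<le> L * norm (y x - y s)" using gl yb x st by auto
    also have "\<dots> \<le> L * (3 * K * (x - s))"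
      using ode_lip_time[OF d yb gb, where s=s and t=x] x st L0 by (intro mult_left_mono) auto
    also have "\<dots> \<le> L * (3 * K) * (t - s)"
    proof -
      have K0: "K \<ge> 0" using gb[of "y s"] yb[of s] st by (meson norm_ge_zero order_trans)
      have "3 * K * (x - s) \<le> 3 * K * (t - s)" using x K0 by (intro mult_left_mono) auto
      then show ?thesis using L0 by (simp add: mult_left_mono mult.assoc)
    qed
    finally show "norm (g (y x) - g (y s)) \<le> L * (3 * K) * (t - s)" .
  qed (use st in auto)
  then show ?thesis using st by (simp add: mult.commute mult.left_commute)
qed

lemma ode_unique:
  fixes y1 y2 :: "real \<Rightarrow> 'b::real_inner" and g :: "'b \<Rightarrow> 'b"
  assumes d1: "\<And>t. t \<ge> 0 \<Longrightarrow> (y1 has_vector_derivative g (y1 t)) (at t within {0..})"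
    and d2: "\<And>t. t \<ge> 0 \<Longrightarrow> (y2 has_vector_derivative g (y2 t)) (at t within {0..})"
    and b: "\<And>s. 0 \<le> s \<Longrightarrow> s \<le> T \<Longrightarrow> norm (y1 s) \<le> R \<and> norm (y2 s) \<le> R"
    and gl: "\<And>x x'. norm x \<le> R \<Longrightarrow> norm x' \<le> R \<Longrightarrow> norm (g x - g x') \<le> L * norm (x - x')"
    and L0: "L \<ge> 0"
    and init: "y1 0 = y2 0" and t: "0 \<le> t" "t \<le> T"
  shows "y1 t = y2 t"
proof -
  define e where "e s = y1 s - y2 s" for s
  define \<psi> where "\<psi> s = exp (- (2 * L) * s) * (e s \<bullet> e s)" for s
  have "\<psi> t - \<psi> 0 \<le> 0 * (t - 0)"
  proof (rule real_mvt_le[OF t(1)])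
    fix s assume s: "0 \<le> s" "s \<le> t"
    have d1s: "(y1 has_vector_derivative g (y1 s)) (at s within {0..t})"
      using has_vector_derivative_within_subset[OF d1[of s]] s by auto
    have d2s: "(y2 has_vector_derivative g (y2 s)) (at s within {0..t})"
      using has_vector_derivative_within_subset[OF d2[of s]] s by auto
    have de: "(e has_vector_derivative (g (y1 s) - g (y2 s))) (at s within {0..t})"
      unfolding e_def by (intro has_vector_derivative_diff d1s d2s)
    have dee: "((\<lambda>s. e s \<bullet> e s) has_vector_derivative (e s \<bullet> (g (y1 s) - g (y2 s)) + (g (y1 s) - g (y2 s)) \<bullet> e s)) (at s within {0..t})"
      by (rule bounded_bilinear.has_vector_derivative[OF bounded_bilinear_inner de de])
    have dexp: "((\<lambda>s. exp (- (2 * L) * s)) has_vector_derivative (exp (- (2 * L) * s) * (- (2 * L)))) (at s within {0..t})"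
      unfolding has_real_derivative_iff_has_vector_derivative[symmetric]
      by (auto intro!: derivative_eq_intros)
    show "(\<psi> has_vector_derivative (exp (- (2 * L) * s) * (e s \<bullet> (g (y1 s) - g (y2 s)) + (g (y1 s) - g (y2 s)) \<bullet> e s) + (exp (- (2 * L) * s) * (- (2 * L))) * (e s \<bullet> e s))) (at s within {0..t})"
      unfolding \<psi>_def by (rule has_vector_derivative_mult[OF dexp dee])
    have bs: "norm (y1 s) \<le> R" "norm (y2 s) \<le> R" using b[of s] s t by auto
    have "e s \<bullet> (g (y1 s) - g (y2 s)) \<le> norm (e s) * norm (g (y1 s) - g (y2 s))" by (rule norm_cauchy_schwarz)
    also have "\<dots> \<le> norm (e s) * (L * norm (e s))"
      using gl[OF bs] by (intro mult_left_mono) (auto simp: e_def)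
    finally have i1: "e s \<bullet> (g (y1 s) - g (y2 s)) \<le> L * (e s \<bullet> e s)"
      by (simp add: power2_norm_eq_inner[symmetric] power2_eq_square mult.commute mult.left_commute)
    have "e s \<bullet> (g (y1 s) - g (y2 s)) + (g (y1 s) - g (y2 s)) \<bullet> e s - 2 * L * (e s \<bullet> e s) \<le> 0"
      using i1 by (simp add: inner_commute)
    then have "exp (- (2 * L) * s) * (e s \<bullet> (g (y1 s) - g (y2 s)) + (g (y1 s) - g (y2 s)) \<bullet> e s - 2 * L * (e s \<bullet> e s)) \<le> 0"
      by (simp add: mult_nonneg_nonpos)
    then show "exp (- (2 * L) * s) * (e s \<bullet> (g (y1 s) - g (y2 s)) + (g (y1 s) - g (y2 s)) \<bullet> e s) + (exp (- (2 * L) * s) * (- (2 * L))) * (e s \<bullet> e s) \<le> 0"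
      by (simp add: algebra_simps)
  qed
  moreover have "\<psi> 0 = 0" by (simp add: \<psi>_def e_def init)
  ultimately have "\<psi> t \<le> 0" by simp
  then have "e t \<bullet> e t \<le> 0" unfolding \<psi>_def by (simp add: mult_le_0_iff)
  then have "e t = 0" by (meson inner_ge_zero order_antisym inner_eq_zero_iff)
  then show ?thesis by (simp add: e_def)
qed

lemma hvd_fst: "(f has_vector_derivative f') F \<Longrightarrow> ((\<lambda>x. fst (f x)) has_vector_derivative fst f') F"
  by (rule bounded_linear.has_vector_derivative[OF bounded_linear_fst])

lemma hvd_snd: "(f has_vector_derivative f') F \<Longrightarrow> ((\<lambda>x. snd (f x)) has_vector_derivative snd f') F"
  by (rule bounded_linear.has_vector_derivative[OF bounded_linear_snd])


lemma nfst: "norm (fst z) \<le> norm z" using norm_fst_le[of "fst z" "snd z"] by simp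
lemma nsnd: "norm (snd z) \<le> norm z" using norm_snd_le[of "snd z" "fst z"] by simp

lemma sq_tri: fixes x y :: real assumes "0 \<le> n" "n \<le> 2 * x + y" "0 \<le> x" "0 \<le> y"
  shows "n\<^sup>2 \<le> 8 * x\<^sup>2 + 2 * y\<^sup>2"
proof -
  have "n\<^sup>2 \<le> (2 * x + y)\<^sup>2" using assms by (intro power_mono) auto
  moreover have "0 \<le> (2 * x - y)\<^sup>2" by simp
  ultimately show ?thesis by (simp add: power2_eq_square algebra_simps)
qed

context sys begin

lemma Gk_energy: "Gk z0 z1 z2 \<bullet> z2 \<le> C0 - c0 * (norm z2)\<^sup>2"
proof -
  obtain u2 q2 where z2: "z2 = (u2, q2)" by (cases z2)
  define w where "w = N (2 *\<^sub>R fst z1 - fst z0)"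
  have "Gk z0 z1 z2 \<bullet> z2 = (F - A u2 - q2 *\<^sub>R w) \<bullet> u2 + (w \<bullet> u2 - \<gamma> * q2 + \<gamma>) * q2"
    by (simp add: Gk_def z2 w_def)
  also have "\<dots> \<le> C0 - c0 * ((norm u2)\<^sup>2 + q2\<^sup>2)" by (rule energy_ineq)
  also have "(norm u2)\<^sup>2 + q2\<^sup>2 = (norm z2)\<^sup>2" by (simp add: z2 norm_Pair_sq)
  finally show ?thesis .
qed

definition Rb :: real where "Rb = sqrt (18 * C0 / c0)"

lemma orb_bound:
  assumes k: "k > 0" and o: "orb k z" and B: "\<And>n. norm (z n) \<le> B"
  shows "norm (z n) \<le> Rb"
proof -
  define \<Phi> where "\<Phi> m = (norm (z (m + 1)))\<^sup>2 + (norm (2 *\<^sub>R z (m + 1) - z m))\<^sup>2" for m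
  define \<alpha> where "\<alpha> = 4 * k * c0 / 9"
  have \<alpha>: "\<alpha> > 0" using k c0_pos by (simp add: \<alpha>_def)
  have step: "\<Phi> m - \<Phi> (m - 1) \<le> 4 * k * (C0 - c0 * (norm (z (m + 1)))\<^sup>2)" for m
  proof -
    have i1: "m - 1 + 1 = m" "m - 1 + 2 = m + 1" by simp_all
    have eq: "3 *\<^sub>R z (m + 1) - 4 *\<^sub>R z m + z (m - 1) = (2 * k) *\<^sub>R Gk (z (m - 1)) (z m) (z (m + 1))"
      using o[unfolded orb_def, rule_format, of "m - 1"] unfolding i1 .
    have "2 * ((3 *\<^sub>R z (m + 1) - 4 *\<^sub>R z m + z (m - 1)) \<bullet> z (m + 1)) = \<Phi> m - \<Phi> (m - 1) + (norm (z (m + 1) - 2 *\<^sub>R z m + z (m - 1)))\<^sup>2"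
      using bdf2_identity[of "z (m + 1)" "z m" "z (m - 1)"] by (simp add: \<Phi>_def)
    moreover have "2 * ((3 *\<^sub>R z (m + 1) - 4 *\<^sub>R z m + z (m - 1)) \<bullet> z (m + 1)) = 4 * k * (Gk (z (m - 1)) (z m) (z (m + 1)) \<bullet> z (m + 1))"
      unfolding eq by simp
    moreover have "4 * k * (Gk (z (m - 1)) (z m) (z (m + 1)) \<bullet> z (m + 1)) \<le> 4 * k * (C0 - c0 * (norm (z (m + 1)))\<^sup>2)"
      using Gk_energy k by (intro mult_left_mono) auto
    moreover have "0 \<le> (norm (z (m + 1) - 2 *\<^sub>R z m + z (m - 1)))\<^sup>2" by simp
    ultimately show ?thesis by linarith
  qed
  have \<Phi>le: "\<Phi> m \<le> 9 * ((norm (z (m + 1)))\<^sup>2 + (norm (z m))\<^sup>2)" for m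
  proof -
    have "norm (2 *\<^sub>R z (m + 1) - z m) \<le> norm (2 *\<^sub>R z (m + 1)) + norm (z m)" by (rule norm_triangle_ineq4)
    then have "norm (2 *\<^sub>R z (m + 1) - z m) \<le> 2 * norm (z (m + 1)) + norm (z m)" by simp
    then have "(norm (2 *\<^sub>R z (m + 1) - z m))\<^sup>2 \<le> 8 * (norm (z (m + 1)))\<^sup>2 + 2 * (norm (z m))\<^sup>2"
      by (intro sq_tri) auto
    moreover have "9 * ((norm (z (m + 1)))\<^sup>2 + (norm (z m))\<^sup>2) = 9 * (norm (z (m + 1)))\<^sup>2 + 9 * (norm (z m))\<^sup>2" by simp
    ultimately show ?thesis unfolding \<Phi>_def using zero_le_power2[of "norm (z m)"] by linarith
  qed
  have rec: "\<Phi> m * (1 + \<alpha>) \<le> \<Phi> (m - 2) + 8 * k * C0" for m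
  proof -
    have i2: "m - 1 - 1 = m - 2" "m - 1 + 1 = m" by simp_all
    have s1: "\<Phi> m - \<Phi> (m - 1) \<le> 4 * k * (C0 - c0 * (norm (z (m + 1)))\<^sup>2)" by (rule step)
    have s2: "\<Phi> (m - 1) - \<Phi> (m - 2) \<le> 4 * k * (C0 - c0 * (norm (z m))\<^sup>2)"
      using step[of "m - 1"] unfolding i2 .
    have "\<alpha> * \<Phi> m \<le> \<alpha> * (9 * ((norm (z (m + 1)))\<^sup>2 + (norm (z m))\<^sup>2))"
      using \<Phi>le \<alpha> by (intro mult_left_mono) auto
    also have "\<dots> = 4 * k * c0 * (norm (z (m + 1)))\<^sup>2 + 4 * k * c0 * (norm (z m))\<^sup>2"
      by (simp add: \<alpha>_def algebra_simps)
    finally have s3: "\<alpha> * \<Phi> m \<le> 4 * k * c0 * (norm (z (m + 1)))\<^sup>2 + 4 * k * c0 * (norm (z m))\<^sup>2" .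
    have "\<Phi> m * (1 + \<alpha>) = \<Phi> m + \<alpha> * \<Phi> m" by (simp add: algebra_simps)
    moreover have "4 * k * (C0 - c0 * (norm (z (m + 1)))\<^sup>2) = 4 * k * C0 - 4 * k * c0 * (norm (z (m + 1)))\<^sup>2"
      "4 * k * (C0 - c0 * (norm (z m))\<^sup>2) = 4 * k * C0 - 4 * k * c0 * (norm (z m))\<^sup>2"
      by (simp_all add: algebra_simps)
    ultimately show ?thesis using s1 s2 s3 by argo
  qed
  have B0: "B \<ge> 0" using B[of 0] norm_ge_zero order_trans by blast
  have \<Phi>B: "\<Phi> m \<le> B\<^sup>2 + (3 * B)\<^sup>2" for m
  proof -
    have "(norm (z (m + 1)))\<^sup>2 \<le> B\<^sup>2" using B by (intro power_mono) auto
    moreover have "norm (2 *\<^sub>R z (m + 1) - z m) \<le> norm (2 *\<^sub>R z (m + 1)) + norm (z m)" by (rule norm_triangle_ineq4)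
    then have "norm (2 *\<^sub>R z (m + 1) - z m) \<le> 3 * B" using B[of "m + 1"] B[of m] by simp
    then have "(norm (2 *\<^sub>R z (m + 1) - z m))\<^sup>2 \<le> (3 * B)\<^sup>2" by (intro power_mono) auto
    ultimately show ?thesis by (simp add: \<Phi>_def)
  qed
  have "\<Phi> (n - 1) \<le> (8 * k * C0) / \<alpha>"
    by (rule sup_recur_bound2[where x=\<Phi> and B="B\<^sup>2 + (3 * B)\<^sup>2" and a=\<alpha> and p=2 and b="8 * k * C0"]) (use \<Phi>B \<alpha> rec in auto)
  also have "\<dots> = 18 * C0 / c0" using k c0_pos by (simp add: \<alpha>_def field_simps)
  finally have "(norm (z n))\<^sup>2 + (norm (2 *\<^sub>R z n - z (n - 1)))\<^sup>2 \<le> 18 * C0 / c0" by (simp add: \<Phi>_def)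
  then have "(norm (z n))\<^sup>2 \<le> 18 * C0 / c0" using zero_le_power2[of "norm (2 *\<^sub>R z n - z (n - 1))"] by linarith
  then show ?thesis unfolding Rb_def by (rule real_le_rsqrt)
qed

lemma Gk_bnd: "\<exists>GB\<ge>0. \<forall>z0 z1 z2. norm z0 \<le> R \<longrightarrow> norm z1 \<le> R \<longrightarrow> norm z2 \<le> R \<longrightarrow> norm (Gk z0 z1 z2) \<le> GB"
proof -
  obtain MN where MN: "MN \<ge> 0" "\<forall>y. norm y \<le> 3 * R \<longrightarrow> norm (N y) \<le> MN" using N_bnd by blast
  obtain KA where KA: "KA \<ge> 0" "\<forall>u. norm (A u) \<le> KA * norm u" using A_bnd by blast
  define GB where "GB = norm F + KA * \<bar>R\<bar> + 2 * \<bar>R\<bar> * MN + \<gamma> * \<bar>R\<bar> + \<gamma>"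
  have "norm (Gk z0 z1 z2) \<le> GB" if h: "norm z0 \<le> R" "norm z1 \<le> R" "norm z2 \<le> R" for z0 z1 z2
  proof -
    define w where "w = 2 *\<^sub>R fst z1 - fst z0"
    have u: "norm (fst z0) \<le> \<bar>R\<bar>" "norm (fst z1) \<le> \<bar>R\<bar>" "norm (fst z2) \<le> \<bar>R\<bar>" "\<bar>snd z2\<bar> \<le> \<bar>R\<bar>"
      using h nfst[of z0] nfst[of z1] nfst[of z2] nsnd[of z2] by auto
    have "norm w \<le> norm (2 *\<^sub>R fst z1) + norm (fst z0)" unfolding w_def by (rule norm_triangle_ineq4)
    then have "norm w \<le> 3 * R" using h nfst[of z0] nfst[of z1] by simp
    then have Nw: "norm (N w) \<le> MN" using MN by blast
    have a1: "norm (A (fst z2)) \<le> KA * \<bar>R\<bar>"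
      using spec[OF KA(2), of "fst z2"] mult_left_mono[OF u(3) KA(1)] by linarith
    have a2: "norm (snd z2 *\<^sub>R N w) \<le> \<bar>R\<bar> * MN"
      using mult_mono[OF u(4) Nw abs_ge_zero norm_ge_zero] by simp
    have a3: "\<bar>N w \<bullet> fst z2\<bar> \<le> MN * \<bar>R\<bar>"
      using Cauchy_Schwarz_ineq2[of "N w" "fst z2"] mult_mono[OF Nw u(3) MN(1) norm_ge_zero] by linarith
    have a4: "\<bar>\<gamma> * snd z2\<bar> \<le> \<gamma> * \<bar>R\<bar>"
      using u(4) gamma_pos by (simp add: abs_mult mult_left_mono)
    have "norm (Gk z0 z1 z2) \<le> norm (F - A (fst z2) - snd z2 *\<^sub>R N w) + norm (N w \<bullet> fst z2 - \<gamma> * snd z2 + \<gamma>)"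
      unfolding Gk_def w_def by (rule norm_Pair_le)
    also have "\<dots> \<le> (norm F + norm (A (fst z2)) + norm (snd z2 *\<^sub>R N w)) + (\<bar>N w \<bullet> fst z2\<bar> + \<bar>\<gamma> * snd z2\<bar> + \<gamma>)"
    proof (rule add_mono)
      show "norm (F - A (fst z2) - snd z2 *\<^sub>R N w) \<le> norm F + norm (A (fst z2)) + norm (snd z2 *\<^sub>R N w)"
        using norm_triangle_ineq4[of "F - A (fst z2)" "snd z2 *\<^sub>R N w"] norm_triangle_ineq4[of F "A (fst z2)"] by linarith
      show "norm (N w \<bullet> fst z2 - \<gamma> * snd z2 + \<gamma>) \<le> \<bar>N w \<bullet> fst z2\<bar> + \<bar>\<gamma> * snd z2\<bar> + \<gamma>"
        unfolding real_norm_def using abs_triangle_ineq4[of "N w \<bullet> fst z2" "\<gamma> * snd z2"] abs_triangle_ineq[of "N w \<bullet> fst z2 - \<gamma> * snd z2" \<gamma>] gamma_pos by linarith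
    qed
    also have "\<dots> \<le> GB" using a1 a2 a3 a4 by (simp add: GB_def algebra_simps)
    finally show ?thesis .
  qed
  moreover have "GB \<ge> 0" using KA MN gamma_pos by (simp add: GB_def)
  ultimately show ?thesis by blast
qed

lemma Gk_res: "\<exists>LR\<ge>0. \<forall>z0 z1 z2. norm z0 \<le> R \<longrightarrow> norm z1 \<le> R \<longrightarrow> norm z2 \<le> R \<longrightarrow>
    norm (Gk z0 z1 z2 - f z2) \<le> LR * (norm (z1 - z0) + norm (z2 - z1))"
proof -
  obtain LN where LN: "LN \<ge> 0" "\<forall>y z. norm y \<le> 3 * R \<longrightarrow> norm z \<le> 3 * R \<longrightarrow> norm (N y - N z) \<le> LN * norm (y - z)"
    using N_lip by blast
  define LR where "LR = 2 * \<bar>R\<bar> * LN"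
  have "norm (Gk z0 z1 z2 - f z2) \<le> LR * (norm (z1 - z0) + norm (z2 - z1))"
    if h: "norm z0 \<le> R" "norm z1 \<le> R" "norm z2 \<le> R" for z0 z1 z2
  proof -
    obtain u2 q2 where z2: "z2 = (u2, q2)" by (cases z2)
    define w where "w = 2 *\<^sub>R fst z1 - fst z0"
    have u: "norm u2 \<le> \<bar>R\<bar>" "\<bar>q2\<bar> \<le> \<bar>R\<bar>" using h(3) nfst[of z2] nsnd[of z2] by (auto simp: z2)
    have R0: "R \<ge> 0" using h(1) norm_ge_zero order_trans by blast
    have "norm w \<le> norm (2 *\<^sub>R fst z1) + norm (fst z0)" unfolding w_def by (rule norm_triangle_ineq4)
    then have nw: "norm w \<le> 3 * R" using h nfst[of z0] nfst[of z1] by simp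
    have nu2: "norm u2 \<le> 3 * R" using u R0 by simp
    have wu: "w - u2 = fst (z1 - z0) - fst (z2 - z1)" by (simp add: w_def z2 algebra_simps scaleR_2)
    have dw: "norm (w - u2) \<le> norm (z1 - z0) + norm (z2 - z1)"
      unfolding wu using norm_triangle_ineq4[of "fst (z1 - z0)" "fst (z2 - z1)"] nfst[of "z1 - z0"] nfst[of "z2 - z1"] by linarith
    have NN: "norm (N w - N u2) \<le> LN * norm (w - u2)" using LN(2) nw nu2 by blast
    have eq: "Gk z0 z1 z2 - f z2 = (- (q2 *\<^sub>R (N w - N u2)), (N w - N u2) \<bullet> u2)"
      by (simp add: Gk_def f_simp z2 w_def algebra_simps inner_diff_left)
    have "norm (Gk z0 z1 z2 - f z2) \<le> norm (- (q2 *\<^sub>R (N w - N u2))) + norm ((N w - N u2) \<bullet> u2)"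
      unfolding eq by (rule norm_Pair_le)
    also have "\<dots> \<le> \<bar>R\<bar> * norm (N w - N u2) + norm (N w - N u2) * \<bar>R\<bar>"
    proof (rule add_mono)
      show "norm (- (q2 *\<^sub>R (N w - N u2))) \<le> \<bar>R\<bar> * norm (N w - N u2)"
        using u(2) by (simp add: mult_right_mono)
      show "norm ((N w - N u2) \<bullet> u2) \<le> norm (N w - N u2) * \<bar>R\<bar>"
        using Cauchy_Schwarz_ineq2[of "N w - N u2" u2] mult_left_mono[OF u(1) norm_ge_zero[of "N w - N u2"]] by simp
    qed
    also have "\<dots> = 2 * \<bar>R\<bar> * norm (N w - N u2)" by simp
    also have "\<dots> \<le> 2 * \<bar>R\<bar> * (LN * (norm (z1 - z0) + norm (z2 - z1)))"
    proof -
      have "norm (N w - N u2) \<le> LN * (norm (z1 - z0) + norm (z2 - z1))"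
        using NN mult_left_mono[OF dw LN(1)] by linarith
      then show ?thesis by (intro mult_left_mono) auto
    qed
    also have "\<dots> = LR * (norm (z1 - z0) + norm (z2 - z1))" by (simp add: LR_def)
    finally show ?thesis .
  qed
  moreover have "LR \<ge> 0" using LN by (simp add: LR_def)
  ultimately show ?thesis by blast
qed

lemma d_bound:
  assumes k: "k > 0" and o: "orb k z" and zb: "\<And>n. norm (z n) \<le> R"
    and GB: "\<And>n. norm (Gk (z n) (z (n + 1)) (z (n + 2))) \<le> GB"
  shows "norm (z (n + 1) - z n) \<le> k * GB"
proof -
  define x where "x m = norm (z (m + 1) - z m)" for m
  have rec: "x m * (1 + 2) \<le> x (m - 1) + 2 * k * GB" for m
  proof -
    have i1: "m - 1 + 1 = m" "m - 1 + 2 = m + 1" by simp_all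
    have eq: "3 *\<^sub>R z (m + 1) - 4 *\<^sub>R z m + z (m - 1) = (2 * k) *\<^sub>R Gk (z (m - 1)) (z m) (z (m + 1))"
      using o[unfolded orb_def, rule_format, of "m - 1"] unfolding i1 .
    have f4: "4 *\<^sub>R z m = 3 *\<^sub>R z m + z m" using scaleR_left_distrib[of 3 1 "z m"] by simp
    have "3 *\<^sub>R (z (m + 1) - z m) = (z m - z (m - 1)) + (3 *\<^sub>R z (m + 1) - 4 *\<^sub>R z m + z (m - 1))"
      unfolding f4 by (simp add: algebra_simps)
    also have "\<dots> = (z m - z (m - 1)) + (2 * k) *\<^sub>R Gk (z (m - 1)) (z m) (z (m + 1))" unfolding eq ..
    finally have e3: "3 *\<^sub>R (z (m + 1) - z m) = (z m - z (m - 1)) + (2 * k) *\<^sub>R Gk (z (m - 1)) (z m) (z (m + 1))" .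
    have "norm (3 *\<^sub>R (z (m + 1) - z m)) \<le> norm (z m - z (m - 1)) + norm ((2 * k) *\<^sub>R Gk (z (m - 1)) (z m) (z (m + 1)))"
      unfolding e3 by (rule norm_triangle_ineq)
    moreover have "norm ((2 * k) *\<^sub>R Gk (z (m - 1)) (z m) (z (m + 1))) \<le> 2 * k * GB"
      using GB[of "m - 1"] k unfolding i1 by (simp add: mult_left_mono)
    ultimately show ?thesis by (simp add: x_def)
  qed
  have xb: "x m \<le> 2 * R" for m
    using norm_triangle_ineq4[of "z (m + 1)" "z m"] zb[of m] zb[of "m + 1"] by (simp add: x_def)
  have "x n \<le> 2 * k * GB / 2"
    by (rule sup_recur_bound2[where x=x and B="2*R" and a=2 and p=1 and b="2*k*GB"]) (use xb rec in auto)
  then show ?thesis by (simp add: x_def)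
qed

end

lemma pow_exp_bound:
  fixes x :: real assumes "x \<ge> 0"
  shows "(1 + x) ^ j \<le> exp (real j * x)"
proof -
  have "(1 + x) ^ j \<le> (exp x) ^ j" using assms by (intro power_mono) (auto simp: exp_ge_add_one_self)
  also have "\<dots> = exp (real j * x)" by (simp add: exp_of_nat_mult)
  finally show ?thesis .
qed

context sys begin

lemma disc_compare:
  fixes z :: "int \<Rightarrow> 'a \<times> real" and y :: "real \<Rightarrow> 'a \<times> real"
  assumes k: "0 < k" and o: "orb k z" and zb: "\<And>n. norm (z n) \<le> Rz"
    and GB: "\<And>z0 z1 z2. norm z0 \<le> Rz \<Longrightarrow> norm z1 \<le> Rz \<Longrightarrow> norm z2 \<le> Rz \<Longrightarrow> norm (Gk z0 z1 z2) \<le> GB"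
    and LR: "\<And>z0 z1 z2. norm z0 \<le> Rz \<Longrightarrow> norm z1 \<le> Rz \<Longrightarrow> norm z2 \<le> Rz \<Longrightarrow> norm (Gk z0 z1 z2 - f z2) \<le> LR * (norm (z1 - z0) + norm (z2 - z1))"
    and Lf: "\<And>x x'. norm x \<le> R1 \<Longrightarrow> norm x' \<le> R1 \<Longrightarrow> norm (f x - f x') \<le> L * norm (x - x')"
    and Kf: "\<And>x. norm x \<le> R1 \<Longrightarrow> norm (f x) \<le> K"
    and R1: "Rz \<le> R1"
    and L0: "L \<ge> 0" and GB0: "GB \<ge> 0" and LR0: "LR \<ge> 0" and K0: "K \<ge> 0"
    and y: "\<And>t. t \<ge> 0 \<Longrightarrow> (y has_vector_derivative f (y t)) (at t within {0..})"
    and y0: "y 0 = z a"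
    and yb: "\<And>t. 0 \<le> t \<Longrightarrow> t \<le> Th \<Longrightarrow> norm (y t) \<le> R1"
    and M: "real M * k \<le> Th"
  shows "norm (z (a + int M) - y (real M * k)) \<le> k * (exp (L * Th) * (3 * GB + Th * (4 * LR * GB + 7 * L * GB + 6 * L * K)) + 3 * GB)"
proof -
  define c4 where "c4 = 4 * LR * GB + 7 * L * GB + 6 * L * K"
  have c40: "c4 \<ge> 0" using L0 GB0 LR0 K0 by (simp add: c4_def)
  define E where "E j = 3 *\<^sub>R z (a + int j + 1) - z (a + int j) - 2 *\<^sub>R y (real j * k)" for j
  have Gn: "norm (Gk (z n) (z (n + 1)) (z (n + 2))) \<le> GB" for n using GB zb by blast
  have dB: "norm (z (n + 1) - z n) \<le> k * GB" for n by (rule d_bound[OF k o zb Gn])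
  have zR1: "norm (z n) \<le> R1" for n using zb[of n] R1 by linarith
  have zy: "norm (z (a + int j) - y (real j * k)) \<le> (norm (E j) + 3 * (k * GB)) / 2" for j
  proof -
    have eqz: "2 *\<^sub>R (z (a + int j) - y (real j * k)) = E j - 3 *\<^sub>R (z (a + int j + 1) - z (a + int j))"
      using scaleR_left_distrib[of 2 1 "z (a + int j)"] by (simp add: E_def algebra_simps)
    have "norm (2 *\<^sub>R (z (a + int j) - y (real j * k))) \<le> norm (E j) + norm (3 *\<^sub>R (z (a + int j + 1) - z (a + int j)))"
      unfolding eqz by (rule norm_triangle_ineq4)
    then have "2 * norm (z (a + int j) - y (real j * k)) \<le> norm (E j) + 3 * norm (z (a + int j + 1) - z (a + int j))"
      by simp
    moreover have "3 * norm (z (a + int j + 1) - z (a + int j)) \<le> 3 * (k * GB)" using dB[of "a + int j"] by simp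
    ultimately have "2 * norm (z (a + int j) - y (real j * k)) \<le> norm (E j) + 3 * (k * GB)" by linarith
    then show ?thesis by simp
  qed
  have stepE: "norm (E (Suc j)) \<le> (1 + k * L) * norm (E j) + k\<^sup>2 * c4" if j: "Suc j \<le> M" for j
  proof -
    define n where "n = a + int j"
    define G where "G = Gk (z n) (z (n + 1)) (z (n + 2))"
    define yj where "yj = y (real j * k)"
    define yj1 where "yj1 = y (real (Suc j) * k)"
    have i: "a + int (Suc j) = n + 1" "a + int (Suc j) + 1 = n + 2" "a + int j = n" "a + int j + 1 = n + 1" by (simp_all add: n_def)
    have orbn: "3 *\<^sub>R z (n + 2) - 4 *\<^sub>R z (n + 1) + z n = (2 * k) *\<^sub>R G"
      using o unfolding orb_def G_def by blast
    have f4: "4 *\<^sub>R z (n + 1) = 3 *\<^sub>R z (n + 1) + z (n + 1)" using scaleR_left_distrib[of 3 1 "z (n + 1)"] by simp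
    have Eeq: "E (Suc j) = E j + (2 * k) *\<^sub>R (G - f yj) - 2 *\<^sub>R (yj1 - yj - k *\<^sub>R f yj)"
    proof -
      have "E (Suc j) - E j = (3 *\<^sub>R z (n + 2) - 4 *\<^sub>R z (n + 1) + z n) - 2 *\<^sub>R (yj1 - yj)"
        unfolding E_def i yj_def yj1_def f4 by (simp add: algebra_simps)
      then have "E (Suc j) - E j = (2 * k) *\<^sub>R G - 2 *\<^sub>R (yj1 - yj)" unfolding orbn .
      then show ?thesis by (simp add: algebra_simps)
    qed
    have jk: "real j * k \<ge> 0" "real j * k \<le> real (Suc j) * k" "real (Suc j) * k \<le> Th"
    proof -
      show "real j * k \<ge> 0" using k by simp
      show "real j * k \<le> real (Suc j) * k" using k by (simp add: mult_right_mono)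
      have "real (Suc j) * k \<le> real M * k" using j k by (intro mult_right_mono) auto
      then show "real (Suc j) * k \<le> Th" using M by linarith
    qed
    have yjR: "norm yj \<le> R1" unfolding yj_def using yb jk by auto
    have ystep: "norm (yj1 - yj - k *\<^sub>R f yj) \<le> L * (3 * K) * k * k"
    proof -
      have "norm (yj1 - yj - (real (Suc j) * k - real j * k) *\<^sub>R f yj) \<le> L * (3 * K) * (real (Suc j) * k - real j * k) * (real (Suc j) * k - real j * k)"
        unfolding yj_def yj1_def by (rule ode_step[OF y yb Lf Kf jk L0])
      moreover have "real (Suc j) * k - real j * k = k" by (simp add: algebra_simps)
      ultimately show ?thesis by simp
    qed
    have t1: "norm (G - f (z (n + 2))) \<le> LR * (2 * (k * GB))"
    proof -
      have "norm (G - f (z (n + 2))) \<le> LR * (norm (z (n + 1) - z n) + norm (z (n + 2) - z (n + 1)))"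
        unfolding G_def by (rule LR[OF zb zb zb])
      moreover have "norm (z (n + 1) - z n) + norm (z (n + 2) - z (n + 1)) \<le> 2 * (k * GB)"
        using dB[of n] dB[of "n + 1"] by (simp add: add.assoc)
      ultimately show ?thesis using mult_left_mono[of _ _ LR, OF _ LR0] by (meson order_trans)
    qed
    have t2: "norm (f (z (n + 2)) - f (z n)) \<le> L * (2 * (k * GB))"
    proof -
      have "norm (f (z (n + 2)) - f (z n)) \<le> L * norm (z (n + 2) - z n)" by (rule Lf[OF zR1 zR1])
      moreover have "norm (z (n + 2) - z n) \<le> 2 * (k * GB)"
      proof -
        have eqq: "z (n + 2) - z n = (z (n + 1 + 1) - z (n + 1)) + (z (n + 1) - z n)" by (simp add: add.assoc)
        have "norm (z (n + 2) - z n) \<le> norm (z (n + 1 + 1) - z (n + 1)) + norm (z (n + 1) - z n)"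
          unfolding eqq by (rule norm_triangle_ineq)
        then show ?thesis using dB[of n] dB[of "n + 1"] by linarith
      qed
      ultimately show ?thesis using mult_left_mono[of _ _ L, OF _ L0] by (meson order_trans)
    qed
    have t3: "norm (f (z n) - f yj) \<le> L * ((norm (E j) + 3 * (k * GB)) / 2)"
    proof -
      have "norm (f (z n) - f yj) \<le> L * norm (z n - yj)" by (rule Lf[OF zR1 yjR])
      moreover have "norm (z n - yj) \<le> (norm (E j) + 3 * (k * GB)) / 2" using zy[of j] by (simp add: n_def yj_def)
      ultimately show ?thesis using mult_left_mono[of _ _ L, OF _ L0] by (meson order_trans)
    qed
    have tG: "norm (G - f yj) \<le> LR * (2 * (k * GB)) + L * (2 * (k * GB)) + L * ((norm (E j) + 3 * (k * GB)) / 2)"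
    proof -
      have eqq: "G - f yj = (G - f (z (n + 2))) + (f (z (n + 2)) - f (z n)) + (f (z n) - f yj)" by simp
      have "norm (G - f yj) \<le> norm (G - f (z (n + 2))) + norm (f (z (n + 2)) - f (z n)) + norm (f (z n) - f yj)"
        unfolding eqq using norm_triangle_ineq[of "(G - f (z (n + 2))) + (f (z (n + 2)) - f (z n))" "f (z n) - f yj"]
          norm_triangle_ineq[of "G - f (z (n + 2))" "f (z (n + 2)) - f (z n)"] by linarith
      then show ?thesis using t1 t2 t3 by linarith
    qed
    have "norm (E (Suc j)) \<le> norm (E j) + norm ((2 * k) *\<^sub>R (G - f yj)) + norm (2 *\<^sub>R (yj1 - yj - k *\<^sub>R f yj))"
      unfolding Eeq using norm_triangle_ineq4[of "E j + (2 * k) *\<^sub>R (G - f yj)" "2 *\<^sub>R (yj1 - yj - k *\<^sub>R f yj)"]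
        norm_triangle_ineq[of "E j" "(2 * k) *\<^sub>R (G - f yj)"] by linarith
    also have "\<dots> = norm (E j) + (2 * k) * norm (G - f yj) + 2 * norm (yj1 - yj - k *\<^sub>R f yj)"
      using k by simp
    also have "\<dots> \<le> norm (E j) + (2 * k) * (LR * (2 * (k * GB)) + L * (2 * (k * GB)) + L * ((norm (E j) + 3 * (k * GB)) / 2)) + 2 * (L * (3 * K) * k * k)"
      using tG ystep k by (intro add_mono mult_left_mono order_refl) auto
    also have "\<dots> = (1 + k * L) * norm (E j) + k\<^sup>2 * c4"
      by (simp add: c4_def algebra_simps power2_eq_square)
    finally show ?thesis .
  qed
  have E0: "norm (E 0) \<le> 3 * (k * GB)"
  proof -
    have "E 0 = 3 *\<^sub>R (z (a + 1) - z a)" using scaleR_left_distrib[of 2 1 "z a"] by (simp add: E_def y0 algebra_simps)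
    then show ?thesis using dB[of a] by simp
  qed
  have ind: "j \<le> M \<Longrightarrow> norm (E j) \<le> (1 + k * L) ^ j * (3 * (k * GB) + real j * k\<^sup>2 * c4)" for j
  proof (induction j)
    case 0 then show ?case using E0 by simp
  next
    case (Suc j)
    have IH: "norm (E j) \<le> (1 + k * L) ^ j * (3 * (k * GB) + real j * k\<^sup>2 * c4)" using Suc by simp
    have kL: "1 + k * L \<ge> 1" using k L0 by simp
    have X0: "0 \<le> 3 * (k * GB) + real j * k\<^sup>2 * c4" using k GB0 c40 by simp
    have p1: "(1 + k * L) ^ j \<ge> 1" using kL by (simp add: one_le_power)
    have "norm (E (Suc j)) \<le> (1 + k * L) * norm (E j) + k\<^sup>2 * c4" using stepE Suc.prems by blast
    also have "\<dots> \<le> (1 + k * L) * ((1 + k * L) ^ j * (3 * (k * GB) + real j * k\<^sup>2 * c4)) + k\<^sup>2 * c4"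
      using IH kL by (intro add_mono mult_left_mono) auto
    also have "\<dots> \<le> (1 + k * L) ^ Suc j * (3 * (k * GB) + real j * k\<^sup>2 * c4) + (1 + k * L) ^ Suc j * (k\<^sup>2 * c4)"
    proof -
      have hP: "1 \<le> (1 + k * L) ^ Suc j" using kL by (rule one_le_power)
      have X0': "0 \<le> k\<^sup>2 * c4" using c40 by simp
      have "1 * (k\<^sup>2 * c4) \<le> (1 + k * L) ^ Suc j * (k\<^sup>2 * c4)" by (rule mult_right_mono[OF hP X0'])
      then have "k\<^sup>2 * c4 \<le> (1 + k * L) ^ Suc j * (k\<^sup>2 * c4)" by simp
      then show ?thesis by (simp add: mult.assoc)
    qed
    also have "\<dots> = (1 + k * L) ^ Suc j * (3 * (k * GB) + real (Suc j) * k\<^sup>2 * c4)"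
      by (simp add: algebra_simps)
    finally show ?case .
  qed
  have EM: "norm (E M) \<le> exp (L * Th) * (k * (3 * GB + Th * c4))"
  proof -
    have "norm (E M) \<le> (1 + k * L) ^ M * (3 * (k * GB) + real M * k\<^sup>2 * c4)" using ind by simp
    also have "\<dots> \<le> exp (L * Th) * (k * (3 * GB + Th * c4))"
    proof (rule mult_mono)
      have "(1 + k * L) ^ M \<le> exp (real M * (k * L))" using k L0 by (intro pow_exp_bound) simp
      also have "\<dots> \<le> exp (L * Th)"
      proof -
        have "real M * (k * L) = (real M * k) * L" by simp
        also have "\<dots> \<le> Th * L" using M L0 by (rule mult_right_mono)
        finally show ?thesis by (simp add: mult.commute)
      qed
      finally show "(1 + k * L) ^ M \<le> exp (L * Th)" .
      have "real M * k\<^sup>2 * c4 = k * ((real M * k) * c4)" by (simp add: power2_eq_square)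
      also have "\<dots> \<le> k * (Th * c4)" using M c40 k by (intro mult_left_mono mult_right_mono) auto
      finally show "3 * (k * GB) + real M * k\<^sup>2 * c4 \<le> k * (3 * GB + Th * c4)" by (simp add: algebra_simps)
      show "0 \<le> exp (L * Th)" by simp
      show "0 \<le> 3 * (k * GB) + real M * k\<^sup>2 * c4" using k GB0 c40 by simp
    qed
    finally show ?thesis .
  qed
  have "norm (z (a + int M) - y (real M * k)) \<le> (norm (E M) + 3 * (k * GB)) / 2" by (rule zy)
  also have "\<dots> \<le> norm (E M) + 3 * (k * GB)" using k GB0 by simp
  also have "\<dots> \<le> exp (L * Th) * (k * (3 * GB + Th * c4)) + 3 * (k * GB)" using EM by simp
  also have "\<dots> = k * (exp (L * Th) * (3 * GB + Th * c4) + 3 * GB)" by (simp add: algebra_simps)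
  finally show ?thesis by (simp add: c4_def)
qed

end

context sys begin

lemma f_fst: "fst (f p) = F - A (fst p) - snd p *\<^sub>R N (fst p)" by (cases p) (simp add: f_simp)
lemma f_snd: "snd (f p) = \<gamma> - \<gamma> * snd p" by (cases p) (simp add: f_simp N_orth)

lemma Sq_props:
  assumes "solution_semigroup (aug_field A N F \<gamma>) Sq"
  shows "Sq 0 x = x" and "\<And>t. t \<ge> 0 \<Longrightarrow> ((\<lambda>s. Sq s x) has_vector_derivative f (Sq t x)) (at t within {0..})"
  using assms unfolding solution_semigroup_def f_def by blast+

lemma S_props:
  assumes "solution_semigroup (nse_field A N F) S"
  shows "S 0 x = x" and "\<And>t. t \<ge> 0 \<Longrightarrow> ((\<lambda>s. S s x) has_vector_derivative nse_field A N F (S t x)) (at t within {0..})"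
  using assms unfolding solution_semigroup_def by blast+

lemma Sq_energy:
  assumes Sq: "solution_semigroup (aug_field A N F \<gamma>) Sq" and t: "t \<ge> 0"
  shows "(norm (Sq t x))\<^sup>2 \<le> (norm x)\<^sup>2 + 2 * C0 * t"
proof -
  have "(norm (Sq t x))\<^sup>2 \<le> (norm (Sq 0 x))\<^sup>2 + 2 * C0 * t"
  proof (rule sq_norm_growth[where y = "\<lambda>s. Sq s x" and y' = "\<lambda>s. f (Sq s x)"])
    show "\<And>s. 0 \<le> s \<Longrightarrow> ((\<lambda>s. Sq s x) has_vector_derivative f (Sq s x)) (at s within {0..})"
      by (rule Sq_props(2)[OF Sq])
    show "\<And>s. 0 \<le> s \<Longrightarrow> Sq s x \<bullet> f (Sq s x) \<le> C0"
      using energy_f c0_pos by (smt (verit) mult_nonneg_nonneg zero_le_power2)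
  qed (rule t)
  then show ?thesis using Sq_props(1)[OF Sq] by simp
qed

lemma nse_energy: "u \<bullet> nse_field A N F u \<le> C0"
proof -
  have "(F - A u - 0 *\<^sub>R N u) \<bullet> u + (N u \<bullet> u - \<gamma> * 0 + \<gamma>) * 0 \<le> C0 - c0 * ((norm u)\<^sup>2 + 0\<^sup>2)"
    by (rule energy_ineq)
  moreover have "u \<bullet> nse_field A N F u = (F - A u - 0 *\<^sub>R N u) \<bullet> u"
    using N_orth by (simp add: nse_field_def inner_diff_right inner_commute)
  moreover have "c0 * ((norm u)\<^sup>2 + 0\<^sup>2) \<ge> 0" using c0_pos by simp
  ultimately show ?thesis by simp
qed

lemma S_energy:
  assumes S: "solution_semigroup (nse_field A N F) S" and t: "t \<ge> 0"
  shows "(norm (S t u))\<^sup>2 \<le> (norm u)\<^sup>2 + 2 * C0 * t"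
proof -
  have "(norm (S t u))\<^sup>2 \<le> (norm (S 0 u))\<^sup>2 + 2 * C0 * t"
  proof (rule sq_norm_growth[where y = "\<lambda>s. S s u" and y' = "\<lambda>s. nse_field A N F (S s u)"])
    show "\<And>s. 0 \<le> s \<Longrightarrow> ((\<lambda>s. S s u) has_vector_derivative nse_field A N F (S s u)) (at s within {0..})"
      by (rule S_props(2)[OF S])
    show "\<And>s. 0 \<le> s \<Longrightarrow> S s u \<bullet> nse_field A N F (S s u) \<le> C0" by (rule nse_energy)
  qed (rule t)
  then show ?thesis using S_props(1)[OF S] by simp
qed

lemma Sq_q:
  assumes Sq: "solution_semigroup (aug_field A N F \<gamma>) Sq" and t: "t \<ge> 0"
  shows "(snd (Sq t x) - 1) * exp (\<gamma> * t) = snd x - 1"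
proof -
  define \<psi> where "\<psi> s = (snd (Sq s x) - 1) * exp (\<gamma> * s)" for s
  have d: "(\<psi> has_vector_derivative 0) (at s within {0..t})" if s: "0 \<le> s" "s \<le> t" for s
  proof -
    have d1: "((\<lambda>s. Sq s x) has_vector_derivative f (Sq s x)) (at s within {0..t})"
      using has_vector_derivative_within_subset[OF Sq_props(2)[OF Sq s(1)]] by auto
    have d2: "((\<lambda>s. snd (Sq s x) - 1) has_vector_derivative (\<gamma> - \<gamma> * snd (Sq s x))) (at s within {0..t})"
      unfolding has_vector_derivative_diff_const using hvd_snd[OF d1] by (simp add: f_snd)
    have d3: "((\<lambda>s. exp (\<gamma> * s)) has_vector_derivative (exp (\<gamma> * s) * \<gamma>)) (at s within {0..t})"
      unfolding has_real_derivative_iff_has_vector_derivative[symmetric]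
      by (auto intro!: derivative_eq_intros)
    have "(\<psi> has_vector_derivative ((snd (Sq s x) - 1) * (exp (\<gamma> * s) * \<gamma>) + (\<gamma> - \<gamma> * snd (Sq s x)) * exp (\<gamma> * s))) (at s within {0..t})"
      unfolding \<psi>_def by (rule has_vector_derivative_mult[OF d2 d3])
    moreover have "(snd (Sq s x) - 1) * (exp (\<gamma> * s) * \<gamma>) + (\<gamma> - \<gamma> * snd (Sq s x)) * exp (\<gamma> * s) = 0"
      by (simp add: algebra_simps)
    ultimately show ?thesis by simp
  qed
  have "\<psi> t - \<psi> 0 \<le> 0 * (t - 0)" by (rule real_mvt_le[OF t d]) auto
  moreover have "(\<lambda>s. - \<psi> s) t - (\<lambda>s. - \<psi> s) 0 \<le> 0 * (t - 0)"
  proof (rule real_mvt_le[OF t])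
    fix s assume "0 \<le> s" "s \<le> t"
    then show "((\<lambda>s. - \<psi> s) has_vector_derivative - 0) (at s within {0..t})"
      by (intro has_vector_derivative_minus d)
  qed auto
  ultimately have "\<psi> t = \<psi> 0" by simp
  then show ?thesis using Sq_props(1)[OF Sq] by (simp add: \<psi>_def)
qed

lemma Attq_snd:
  assumes Sq: "solution_semigroup (aug_field A N F \<gamma>) Sq" and G: "global_attractor_flow Sq Att_q"
    and p: "p \<in> Att_q"
  shows "snd p = 1"
proof (rule ccontr)
  assume ne: "snd p \<noteq> 1"
  have inv: "\<And>t. t \<ge> 0 \<Longrightarrow> Sq t ` Att_q = Att_q" and cpt: "compact Att_q"
    using G unfolding global_attractor_flow_def by auto
  obtain Bq where Bq: "\<And>x. x \<in> Att_q \<Longrightarrow> norm x \<le> Bq"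
    using compact_imp_bounded[OF cpt] unfolding bounded_iff by blast
  define \<delta> where "\<delta> = \<bar>snd p - 1\<bar>"
  have \<delta>: "\<delta> > 0" using ne by (simp add: \<delta>_def)
  have B0: "Bq \<ge> 0" using Bq[OF p] norm_ge_zero order_trans by blast
  define t where "t = (Bq + 1) / (\<gamma> * \<delta>)"
  have t0: "t \<ge> 0" using B0 \<delta> gamma_pos by (simp add: t_def)
  obtain x where x: "x \<in> Att_q" "Sq t x = p" using inv[OF t0] p by (metis imageE)
  have "(snd p - 1) * exp (\<gamma> * t) = snd x - 1" using Sq_q[OF Sq t0, of x] x by simp
  then have "\<bar>(snd p - 1) * exp (\<gamma> * t)\<bar> = \<bar>snd x - 1\<bar>" by simp
  then have "\<delta> * exp (\<gamma> * t) = \<bar>snd x - 1\<bar>" by (simp add: \<delta>_def abs_mult)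
  also have "\<dots> \<le> Bq + 1"
  proof -
    have "\<bar>snd x\<bar> \<le> Bq" using Bq[OF x(1)] nsnd[of x] by simp
    moreover have "\<bar>snd x - 1\<bar> \<le> \<bar>snd x\<bar> + \<bar>1\<bar>" by (rule abs_triangle_ineq4)
    ultimately show ?thesis by simp
  qed
  finally have h: "\<delta> * exp (\<gamma> * t) \<le> Bq + 1" .
  have "\<delta> * (1 + \<gamma> * t) \<le> \<delta> * exp (\<gamma> * t)" using \<delta> by (intro mult_left_mono) auto
  moreover have "\<delta> * (1 + \<gamma> * t) = \<delta> + (Bq + 1)" using \<delta> gamma_pos by (simp add: t_def field_simps)
  ultimately show False using h \<delta> by linarith
qed

lemma Attq_fst:
  assumes Sq: "solution_semigroup (aug_field A N F \<gamma>) Sq" and G: "global_attractor_flow Sq Att_q"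
    and S: "solution_semigroup (nse_field A N F) S" and GA: "global_attractor_flow S Att"
    and p: "p \<in> Att_q"
  shows "fst p \<in> Att"
proof -
  have inv: "\<And>t. t \<ge> 0 \<Longrightarrow> Sq t ` Att_q = Att_q" and cpt: "compact Att_q"
    using G unfolding global_attractor_flow_def by auto
  have cA: "compact Att" using GA unfolding global_attractor_flow_def by auto
  obtain Bq where Bq: "\<And>x. x \<in> Att_q \<Longrightarrow> norm x \<le> Bq"
    using compact_imp_bounded[OF cpt] unfolding bounded_iff by blast
  have rep: "\<exists>v\<in>fst ` Att_q. fst p = S t v" if t0: "t \<ge> 0" for t
  proof -
    obtain x where x: "x \<in> Att_q" "Sq t x = p" using inv[OF t0] p by (metis imageE)
    have sx: "snd x = 1" by (rule Attq_snd[OF Sq G x(1)])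
    have q1: "snd (Sq s x) = 1" if "s \<ge> 0" for s
      using Sq_q[OF Sq that, of x] sx by simp
    define Ru where "Ru = sqrt ((norm x)\<^sup>2 + 2 * C0 * t)"
    obtain L where L: "L \<ge> 0" "\<forall>a b. norm a \<le> Ru \<longrightarrow> norm b \<le> Ru \<longrightarrow> norm (nse_field A N F a - nse_field A N F b) \<le> L * norm (a - b)"
      using nse_lip by blast
    have "fst (Sq t x) = S t (fst x)"
    proof (rule ode_unique[where g = "nse_field A N F" and T = t and R = Ru and L = L])
      fix s :: real assume s: "s \<ge> 0"
      have "((\<lambda>s. fst (Sq s x)) has_vector_derivative fst (f (Sq s x))) (at s within {0..})"
        by (rule hvd_fst[OF Sq_props(2)[OF Sq s]])
      moreover have "fst (f (Sq s x)) = nse_field A N F (fst (Sq s x))"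
        by (simp add: f_fst q1[OF s] nse_field_def)
      ultimately show "((\<lambda>s. fst (Sq s x)) has_vector_derivative nse_field A N F (fst (Sq s x))) (at s within {0..})"
        by simp
    next
      fix s :: real assume s: "s \<ge> 0"
      show "((\<lambda>s. S s (fst x)) has_vector_derivative nse_field A N F (S s (fst x))) (at s within {0..})"
        by (rule S_props(2)[OF S s])
    next
      fix s :: real assume s: "0 \<le> s" "s \<le> t"
      have C0t: "2 * C0 * s \<le> 2 * C0 * t" using s C0_nonneg by (intro mult_left_mono) auto
      have "(norm (fst (Sq s x)))\<^sup>2 \<le> (norm (Sq s x))\<^sup>2" using nfst[of "Sq s x"] by (intro power_mono) auto
      also have "\<dots> \<le> (norm x)\<^sup>2 + 2 * C0 * s" by (rule Sq_energy[OF Sq s(1)])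
      finally have a: "norm (fst (Sq s x)) \<le> Ru" unfolding Ru_def using C0t by (intro real_le_rsqrt) linarith
      have "(norm (S s (fst x)))\<^sup>2 \<le> (norm (fst x))\<^sup>2 + 2 * C0 * s" by (rule S_energy[OF S s(1)])
      moreover have "(norm (fst x))\<^sup>2 \<le> (norm x)\<^sup>2" using nfst[of x] by (intro power_mono) auto
      ultimately have b: "norm (S s (fst x)) \<le> Ru" unfolding Ru_def using C0t by (intro real_le_rsqrt) linarith
      show "norm (fst (Sq s x)) \<le> Ru \<and> norm (S s (fst x)) \<le> Ru" using a b by simp
    next
      fix a b :: 'a assume "norm a \<le> Ru" "norm b \<le> Ru"
      then show "norm (nse_field A N F a - nse_field A N F b) \<le> L * norm (a - b)" using L by blast
    next
      show "fst (Sq 0 x) = S 0 (fst x)" using Sq_props(1)[OF Sq] S_props(1)[OF S] by simp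
    qed (use L t0 in auto)
    then show ?thesis using x by force
  qed
  have bB: "bounded (fst ` Att_q)"
    using compact_imp_bounded[OF compact_continuous_image[OF continuous_on_fst[OF continuous_on_id] cpt]] by simp
  have "fst p \<in> closure Att"
    unfolding closure_approachable
  proof (intro allI impI)
    fix e :: real assume e: "e > 0"
    obtain T where T: "\<forall>t\<ge>T. \<forall>v\<in>fst ` Att_q. \<exists>y\<in>Att. dist (S t v) y < e"
      using attract_flow[OF GA bB e] by blast
    obtain v where v: "v \<in> fst ` Att_q" "fst p = S (max T 0) v" using rep[of "max T 0"] by auto
    have mT: "max T 0 \<ge> T" by simp
    obtain y where "y \<in> Att" "dist (S (max T 0) v) y < e" using T[rule_format, OF mT v(1)] by blast
    then show "\<exists>y\<in>Att. dist y (fst p) < e" using v(2) by (metis dist_commute)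
  qed
  then show ?thesis using cA by (simp add: compact_imp_closed)
qed

end

context sys begin

lemma main_approx:
  assumes Sq: "solution_semigroup (aug_field A N F \<gamma>) Sq" and G: "global_attractor_flow Sq Att_q"
    and Gk: "\<forall>k\<in>{0<..1}. global_attractor_map (bdf2_map A N F \<gamma> k) (Att_k k)"
    and e: "e > 0"
  shows "eventually (\<lambda>k. \<forall>x\<in>Att_k k. \<exists>p\<in>Att_q. norm (fst x - p) \<le> e \<and> norm (snd x - p) \<le> e) (at_right 0)"
proof -
  define Bset where "Bset = cball (0::'a \<times> real) Rb"
  have Rb0: "Rb \<ge> 0" using C0_nonneg c0_pos by (simp add: Rb_def divide_nonneg_pos)
  have e4: "e / 4 > 0" using e by simp
  obtain T0 where T0: "\<forall>t\<ge>T0. \<forall>x\<in>Bset. \<exists>y\<in>Att_q. dist (Sq t x) y < e / 4"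
    using attract_flow[OF G _ e4, of Bset] by (auto simp: Bset_def)
  define T1 where "T1 = max T0 0"
  define Th where "Th = T1 + 1"
  have T1: "T1 \<ge> 0" "T1 \<ge> T0" by (simp_all add: T1_def)
  have Th0: "Th \<ge> 0" using T1 by (simp add: Th_def)
  define R1 where "R1 = sqrt (Rb\<^sup>2 + 2 * C0 * Th)"
  have R1: "Rb \<le> R1" unfolding R1_def using C0_nonneg Th0 by (intro real_le_rsqrt) simp
  obtain L where L: "L \<ge> 0" "\<forall>x y. norm x \<le> R1 \<longrightarrow> norm y \<le> R1 \<longrightarrow> norm (f x - f y) \<le> L * norm (x - y)"
    using f_lip by blast
  obtain K where K: "K \<ge> 0" "\<forall>x. norm x \<le> R1 \<longrightarrow> norm (f x) \<le> K" using f_bnd by blast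
  obtain GB where GB: "GB \<ge> 0" "\<forall>z0 z1 z2. norm z0 \<le> Rb \<longrightarrow> norm z1 \<le> Rb \<longrightarrow> norm z2 \<le> Rb \<longrightarrow> norm (Gk z0 z1 z2) \<le> GB"
    using Gk_bnd by blast
  obtain LR where LR: "LR \<ge> 0" "\<forall>z0 z1 z2. norm z0 \<le> Rb \<longrightarrow> norm z1 \<le> Rb \<longrightarrow> norm z2 \<le> Rb \<longrightarrow>
      norm (Gk z0 z1 z2 - f z2) \<le> LR * (norm (z1 - z0) + norm (z2 - z1))"
    using Gk_res by blast
  define Cst where "Cst = exp (L * Th) * (3 * GB + Th * (4 * LR * GB + 7 * L * GB + 6 * L * K)) + 3 * GB"
  have Cst0: "Cst \<ge> 0" unfolding Cst_def using L K GB LR Th0 by (intro add_nonneg_nonneg mult_nonneg_nonneg) auto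
  define \<delta> where "\<delta> = min 1 (e / (4 * (Cst + GB + 1)))"
  have \<delta>: "\<delta> > 0" using e Cst0 GB by (simp add: \<delta>_def)
  have "eventually (\<lambda>k. k \<in> {0<..<\<delta>}) (at_right 0)" by (rule eventually_at_right_real[OF \<delta>])
  then show ?thesis
  proof (rule eventually_mono)
    fix k assume k\<delta>: "k \<in> {0<..<\<delta>}"
    have k: "0 < k" "k \<le> 1" using k\<delta> by (auto simp: \<delta>_def)
    have kk: "k * (Cst + GB + 1) \<le> e / 4"
    proof -
      have "k \<le> e / (4 * (Cst + GB + 1))" using k\<delta> by (simp add: \<delta>_def)
      then show ?thesis using Cst0 GB(1) by (simp add: field_simps)
    qed
    have kC: "k * Cst \<le> e / 4" and kG: "k * GB \<le> e / 4"
    proof -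
      have "k * Cst \<le> k * (Cst + GB + 1)" "k * GB \<le> k * (Cst + GB + 1)" using k Cst0 GB(1) by (intro mult_left_mono; simp)+
      then show "k * Cst \<le> e / 4" "k * GB \<le> e / 4" using kk by linarith+
    qed
    show "\<forall>x\<in>Att_k k. \<exists>p\<in>Att_q. norm (fst x - p) \<le> e \<and> norm (snd x - p) \<le> e"
    proof
      fix x assume x: "x \<in> Att_k k"
      have kin: "k \<in> {0<..1}" using k by simp
      have ga: "global_attractor_map (bdf2_map A N F \<gamma> k) (Att_k k)" by (rule bspec[OF Gk kin])
      obtain z B where z: "orb k z" "\<And>n. norm (z n) \<le> B" "z 0 = fst x" "z 1 = snd x" "\<And>n. (z n, z (n + 1)) \<in> Att_k k"
        by (rule orbit_exists[OF k(1) ga x]) blast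
      have zb: "\<And>n. norm (z n) \<le> Rb" by (rule orb_bound[OF k(1) z(1) z(2)])
      define M where "M = nat \<lceil>T1 / k\<rceil>"
      have MkT1: "real M * k \<ge> T1"
      proof -
        have "real M \<ge> T1 / k" unfolding M_def by (rule real_nat_ceiling_ge)
        then show ?thesis using k by (simp add: field_simps)
      qed
      have MkTh: "real M * k \<le> Th"
      proof -
        have d0: "0 \<le> T1 / k" using T1(1) k(1) by simp
        have nn: "0 \<le> \<lceil>T1 / k\<rceil>" using d0 zero_le_ceiling[of "T1 / k"] by linarith
        have "real M = real_of_int \<lceil>T1 / k\<rceil>" unfolding M_def using nn by simp
        then have "real M \<le> T1 / k + 1" using ceiling_correct[of "T1 / k"] by linarith
        then have "real M * k \<le> (T1 / k + 1) * k" using k by (intro mult_right_mono) auto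
        also have "\<dots> = T1 + k" using k by (simp add: field_simps)
        finally show ?thesis using k by (simp add: Th_def)
      qed
      define y where "y t = Sq t (z (- int M))" for t
      have yd: "\<And>t. t \<ge> 0 \<Longrightarrow> (y has_vector_derivative f (y t)) (at t within {0..})"
        unfolding y_def by (rule Sq_props(2)[OF Sq])
      have y0: "y 0 = z (- int M)" unfolding y_def by (rule Sq_props(1)[OF Sq])
      have yb: "norm (y t) \<le> R1" if "0 \<le> t" "t \<le> Th" for t
      proof -
        have "(norm (y t))\<^sup>2 \<le> (norm (z (- int M)))\<^sup>2 + 2 * C0 * t" unfolding y_def by (rule Sq_energy[OF Sq that(1)])
        moreover have "(norm (z (- int M)))\<^sup>2 \<le> Rb\<^sup>2" using zb by (intro power_mono) auto
        moreover have "2 * C0 * t \<le> 2 * C0 * Th" using that C0_nonneg by (intro mult_left_mono) auto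
        ultimately show ?thesis unfolding R1_def by (intro real_le_rsqrt) linarith
      qed
      have GB': "\<And>z0 z1 z2. norm z0 \<le> Rb \<Longrightarrow> norm z1 \<le> Rb \<Longrightarrow> norm z2 \<le> Rb \<Longrightarrow> norm (Gk z0 z1 z2) \<le> GB"
        using GB(2) by blast
      have LR': "\<And>z0 z1 z2. norm z0 \<le> Rb \<Longrightarrow> norm z1 \<le> Rb \<Longrightarrow> norm z2 \<le> Rb \<Longrightarrow> norm (Gk z0 z1 z2 - f z2) \<le> LR * (norm (z1 - z0) + norm (z2 - z1))"
        using LR(2) by blast
      have L': "\<And>x x'. norm x \<le> R1 \<Longrightarrow> norm x' \<le> R1 \<Longrightarrow> norm (f x - f x') \<le> L * norm (x - x')" using L(2) by blast
      have K': "\<And>x. norm x \<le> R1 \<Longrightarrow> norm (f x) \<le> K" using K(2) by blast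
      have "norm (z (- int M + int M) - y (real M * k)) \<le> k * Cst"
        unfolding Cst_def
        by (rule disc_compare[OF k(1) z(1) zb GB' LR' L' K' R1 L(1) GB(1) LR(1) K(1) yd y0 yb MkTh])
      then have c0: "norm (z 0 - y (real M * k)) \<le> e / 4" using kC by simp
      have zB: "z (- int M) \<in> Bset" using zb by (simp add: Bset_def)
      have MT0: "real M * k \<ge> T0" using MkT1 T1 by linarith
      obtain p where p: "p \<in> Att_q" "dist (Sq (real M * k) (z (- int M))) p < e / 4"
        using T0[rule_format, OF MT0 zB] by blast
      have pd: "norm (y (real M * k) - p) \<le> e / 4" using p(2) by (simp add: y_def dist_norm)
      have Gn: "\<And>n. norm (Gk (z n) (z (n + 1)) (z (n + 2))) \<le> GB" by (rule GB'[OF zb zb zb])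
      have d01: "norm (z (0 + 1) - z 0) \<le> k * GB" by (rule d_bound[OF k(1) z(1) zb Gn])
      have a1: "norm (z 0 - p) \<le> e / 2"
        using norm_triangle_ineq[of "z 0 - y (real M * k)" "y (real M * k) - p"] c0 pd by simp
      have a2: "norm (z 1 - p) \<le> e"
        using norm_triangle_ineq[of "z 1 - z 0" "z 0 - p"] a1 d01 kG e by simp
      show "\<exists>p\<in>Att_q. norm (fst x - p) \<le> e \<and> norm (snd x - p) \<le> e"
        using p(1) a1 a2 z(3,4) e by (intro bexI[of _ p]) auto
    qed
  qed
qed

end

theorem theorem1:
  fixes A N :: "'a::euclidean_space \<Rightarrow> 'a" and F :: 'a and \<gamma> l0 :: real
    and S :: "real \<Rightarrow> 'a \<Rightarrow> 'a" and Sq :: "real \<Rightarrow> 'a \<times> real \<Rightarrow> 'a \<times> real"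
    and Att :: "'a set" and Att_q :: "('a \<times> real) set"
    and Att_k :: "real \<Rightarrow> (('a \<times> real) \<times> ('a \<times> real)) set"
  assumes A_lin: "bounded_linear A"
    and A_sym: "\<forall>u v. A u \<bullet> v = u \<bullet> A v"
    and l0_pos: "l0 > 0"
    and A_coercive: "\<forall>u. A u \<bullet> u \<ge> l0 * (norm u)\<^sup>2"
    and N_loclip: "locally_lipschitz N"
    and N_orth: "\<forall>u. N u \<bullet> u = 0"
    and gamma_pos: "\<gamma> > 0"
    and S_sol: "solution_semigroup (nse_field A N F) S"
    and Att_ga: "global_attractor_flow S Att"
    and Sq_sol: "solution_semigroup (aug_field A N F \<gamma>) Sq"
    and Att_q_ga: "global_attractor_flow Sq Att_q"
    and Att_k_ga: "\<forall>k\<in>{0<..1}. global_attractor_map (bdf2_map A N F \<gamma> k) (Att_k k)"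
  shows "((\<lambda>k. hsdist (Att_k k) (diag_set Att_q)) \<longlongrightarrow> 0) (at_right 0) \<and>
    ((\<lambda>k. hsdist ((fst \<circ> fst) ` Att_k k) Att) \<longlongrightarrow> 0) (at_right 0) \<and>
    ((\<lambda>k. hsdist ((fst \<circ> snd) ` Att_k k) Att) \<longlongrightarrow> 0) (at_right 0)"
proof -
  interpret sys A N F \<gamma> l0
    using A_lin l0_pos A_coercive N_loclip N_orth gamma_pos by (rule sys.intro)
  have key: "\<And>e. e > 0 \<Longrightarrow> eventually (\<lambda>k. \<forall>x\<in>Att_k k. \<exists>p\<in>Att_q. norm (fst x - p) \<le> e \<and> norm (snd x - p) \<le> e) (at_right 0)"
    by (rule main_approx[OF Sq_sol Att_q_ga Att_k_ga])
  have fA: "\<And>p. p \<in> Att_q \<Longrightarrow> fst p \<in> Att" by (rule Attq_fst[OF Sq_sol Att_q_ga S_sol Att_ga])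
  have c1: "((\<lambda>k. hsdist (Att_k k) (diag_set Att_q)) \<longlongrightarrow> 0) (at_right 0)"
  proof (rule tendsto_hsdist_0)
    fix e :: real assume e: "e > 0"
    have "eventually (\<lambda>k. \<forall>x\<in>Att_k k. \<exists>p\<in>Att_q. norm (fst x - p) \<le> e / 2 \<and> norm (snd x - p) \<le> e / 2) (at_right 0)"
      using key[of "e / 2"] e by simp
    then show "eventually (\<lambda>k. \<forall>x\<in>Att_k k. \<exists>y\<in>diag_set Att_q. dist x y \<le> e) (at_right 0)"
    proof (rule eventually_mono)
      fix k assume h: "\<forall>x\<in>Att_k k. \<exists>p\<in>Att_q. norm (fst x - p) \<le> e / 2 \<and> norm (snd x - p) \<le> e / 2"
      show "\<forall>x\<in>Att_k k. \<exists>y\<in>diag_set Att_q. dist x y \<le> e"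
      proof
        fix x assume "x \<in> Att_k k"
        then obtain p where p: "p \<in> Att_q" "norm (fst x - p) \<le> e / 2" "norm (snd x - p) \<le> e / 2" using h by blast
        have "(p, p) \<in> diag_set Att_q" unfolding diag_set_def using p(1) by blast
        moreover have "dist x (p, p) \<le> e"
        proof -
          have "x - (p, p) = (fst x - p, snd x - p)" by (simp add: prod_eq_iff)
          then have "dist x (p, p) \<le> norm (fst x - p) + norm (snd x - p)"
            by (simp add: dist_norm norm_Pair_le)
          then show ?thesis using p by linarith
        qed
        ultimately show "\<exists>y\<in>diag_set Att_q. dist x y \<le> e" by blast
      qed
    qed
  qed
  have c2: "((\<lambda>k. hsdist ((fst \<circ> fst) ` Att_k k) Att) \<longlongrightarrow> 0) (at_right 0)"
  proof (rule tendsto_hsdist_0)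
    fix e :: real assume e: "e > 0"
    show "eventually (\<lambda>k. \<forall>x\<in>(fst \<circ> fst) ` Att_k k. \<exists>y\<in>Att. dist x y \<le> e) (at_right 0)"
      using key[OF e]
    proof (rule eventually_mono)
      fix k assume h: "\<forall>x\<in>Att_k k. \<exists>p\<in>Att_q. norm (fst x - p) \<le> e \<and> norm (snd x - p) \<le> e"
      show "\<forall>x\<in>(fst \<circ> fst) ` Att_k k. \<exists>y\<in>Att. dist x y \<le> e"
      proof
        fix w assume "w \<in> (fst \<circ> fst) ` Att_k k"
        then obtain x where x: "x \<in> Att_k k" "w = fst (fst x)" by auto
        then obtain p where p: "p \<in> Att_q" "norm (fst x - p) \<le> e" using h by blast
        have "dist w (fst p) = norm (fst (fst x - p))" by (simp add: x dist_norm)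
        also have "\<dots> \<le> norm (fst x - p)" by (rule nfst)
        finally have "dist w (fst p) \<le> e" using p(2) by linarith
        then show "\<exists>y\<in>Att. dist w y \<le> e" using fA[OF p(1)] by blast
      qed
    qed
  qed
  have c3: "((\<lambda>k. hsdist ((fst \<circ> snd) ` Att_k k) Att) \<longlongrightarrow> 0) (at_right 0)"
  proof (rule tendsto_hsdist_0)
    fix e :: real assume e: "e > 0"
    show "eventually (\<lambda>k. \<forall>x\<in>(fst \<circ> snd) ` Att_k k. \<exists>y\<in>Att. dist x y \<le> e) (at_right 0)"
      using key[OF e]
    proof (rule eventually_mono)
      fix k assume h: "\<forall>x\<in>Att_k k. \<exists>p\<in>Att_q. norm (fst x - p) \<le> e \<and> norm (snd x - p) \<le> e"
      show "\<forall>x\<in>(fst \<circ> snd) ` Att_k k. \<exists>y\<in>Att. dist x y \<le> e"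
      proof
        fix w assume "w \<in> (fst \<circ> snd) ` Att_k k"
        then obtain x where x: "x \<in> Att_k k" "w = fst (snd x)" by auto
        then obtain p where p: "p \<in> Att_q" "norm (snd x - p) \<le> e" using h by blast
        have "dist w (fst p) = norm (fst (snd x - p))" by (simp add: x dist_norm)
        also have "\<dots> \<le> norm (snd x - p)" by (rule nfst)
        finally have "dist w (fst p) \<le> e" using p(2) by linarith
        then show "\<exists>y\<in>Att. dist w y \<le> e" using fA[OF p(1)] by blast
      qed
    qed
  qed
  show ?thesis using c1 c2 c3 by blast
qed


end
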